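(* Let $0<q<1$ and let $\rho_-=(\pi_+-\pi_-)/2:\mathcal{A}(S^2_q)\to\mathcal{B}(\hat{\mathcal{H}})$. Then $\rho_-$ maps $\mathcal{A}(S^2_q)$ into rapid decay matrices on $\hat{\mathcal{H}}$. Consequently, writing $\pi=\rho_+\otimes\mathrm{id}_{\mathbb{C}^2}+\rho_-\otimes\gamma$ on $\mathcal{H}=\hat{\mathcal{H}}\otimes\mathbb{C}^2$ with $\rho_+=(\pi_++\pi_-)/2$, $\gamma=\begin{pmatrix}1&0\\0&-1\end{pmatrix}$, $F=\begin{pmatrix}0&1\\1&0\end{pmatrix}$, one has $[F,\pi(x)]=2\rho_-(x)\otimes F\gamma$, which is trace class for all $x\in\mathcal{A}(S^2_q)$, and the Fredholm module $(\mathcal{H},F)$ over $\mathcal{A}(S^2_q)$ is finite summable.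
   Context: $\mathcal{A}(S^2_q)$ is the unital $*$-algebra generated by $a,a^*$ and $b=b^*$ with $ba=q^2ab$, $a^*a+b^2=1$, $q^4aa^*+b^2=q^4$. $\hat{\mathcal{H}}$ has orthonormal basis $|l,m\rangle$, $l\in\mathbb{N}+\tfrac12$, $m=-l,\dots,l$ (out-of-range vectors are $0$). With $[x]=(q^x-q^{-x})/(q-q^{-1})$, the representations $\pi_\pm$ on $\hat{\mathcal{H}}$ are: $\pi_\pm(a)|l,m\rangle=q^{m-l-\frac12}\frac{\sqrt{[l+m+1][l+m+2]}}{[2l+2]}|l+1,m+1\rangle-q^{m+l+\frac12}\frac{\sqrt{[l-m-1][l-m]}}{[2l]}|l-1,m+1\rangle\pm\frac{(1+q^2)q^{m-\frac12}}{[2l][2l+2]}\sqrt{[l+m+1][l-m]}\,|l,m+1\rangle$, $\pi_\pm(b)|l,m\rangle=-q^{m+1}\frac{\sqrt{[l+m+1][l-m+1]}}{[2l+2]}|l+1,m\rangle-q^{m+1}\frac{\sqrt{[l+m][l-m]}}{[2l]}|l-1,m\rangle\pm\frac{[l-m+1][l+m]-q^2[l-m][l+m+1]}{[2l][2l+2]}|l,m\rangle$. An operator $T$ on $\hat{\mathcal{H}}$ is a rapid decay matrix if $\sup|\langle l,m|T|l',m'\rangle|(l+l'+1)^p<\infty$ for all $p\in\mathbb{N}$. A Fredholm module $(\mathcal{H},F)$ is finite summable if for some $k$, $[F,x_0]\cdots[F,x_k]$ is trace class for all $x_j$ in the algebra. *)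

theory Defs
  imports "HOL-Analysis.Analysis"
begin

text \<open>Operators are represented by their matrices with respect to a fixed orthonormal
basis: M i j is the matrix coefficient of basis vector i in M applied to basis vector j.\<close>

type_synonym 'i mat = "'i \<Rightarrow> 'i \<Rightarrow> complex"

definition mat_mult :: "'i mat \<Rightarrow> 'i mat \<Rightarrow> 'i mat" where
  "mat_mult M N = (\<lambda>i j. infsum (\<lambda>k. M i k * N k j) UNIV)"

definition mat_add :: "'i mat \<Rightarrow> 'i mat \<Rightarrow> 'i mat" where
  "mat_add M N = (\<lambda>i j. M i j + N i j)"

definition mat_sub :: "'i mat \<Rightarrow> 'i mat \<Rightarrow> 'i mat" where
  "mat_sub M N = (\<lambda>i j. M i j - N i j)"

definition mat_scale :: "complex \<Rightarrow> 'i mat \<Rightarrow> 'i mat" where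
  "mat_scale c M = (\<lambda>i j. c * M i j)"

definition mat_adj :: "'i mat \<Rightarrow> 'i mat" where
  "mat_adj M = (\<lambda>i j. cnj (M j i))"

definition mat_id :: "'i set \<Rightarrow> 'i mat" where
  "mat_id B = (\<lambda>i j. if i = j \<and> i \<in> B then 1 else 0)"

definition mat_tensor :: "'i mat \<Rightarrow> 'k mat \<Rightarrow> ('i \<times> 'k) mat" where
  "mat_tensor M G = (\<lambda>(i, s) (j, t). M i j * G s t)"

definition commutator :: "'i mat \<Rightarrow> 'i mat \<Rightarrow> 'i mat" where
  "commutator S T = mat_sub (mat_mult S T) (mat_mult T S)"

definition hilbert_schmidt :: "'i set \<Rightarrow> 'i mat \<Rightarrow> bool" where
  "hilbert_schmidt B A \<longleftrightarrow>
     (\<forall>i j. (i \<notin> B \<or> j \<notin> B) \<longrightarrow> A i j = 0) \<and>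
     (\<lambda>(i, j). (cmod (A i j))\<^sup>2) summable_on (B \<times> B)"

definition trace_class :: "'i set \<Rightarrow> 'i mat \<Rightarrow> bool" where
  "trace_class B T \<longleftrightarrow> (\<exists>A C. hilbert_schmidt B A \<and> hilbert_schmidt B C \<and> T = mat_mult A C)"

text \<open>Basis vectors |l,m> with l in N + 1/2 and m = -l, ..., l, encoded as pairs of reals.\<close>
definition HB :: "(real \<times> real) set" where
  "HB = {(l, m). l - 1/2 \<in> \<nat> \<and> l + m \<in> \<nat> \<and> m \<le> l}"

definition qnum :: "real \<Rightarrow> real \<Rightarrow> real" where
  "qnum q x = (q powr x - q powr (- x)) / (q - 1 / q)"

text \<open>Matrices of pi_s(a) and pi_s(b), with s = 1 for pi_+ and s = -1 for pi_-.\<close>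
definition amat :: "real \<Rightarrow> real \<Rightarrow> (real \<times> real) mat" where
  "amat q s = (\<lambda>i j. case j of (l, m) \<Rightarrow>
     if i \<in> HB \<and> j \<in> HB then
       (if i = (l + 1, m + 1) then
          complex_of_real (q powr (m - l - 1/2) * sqrt (qnum q (l+m+1) * qnum q (l+m+2)) / qnum q (2*l+2))
        else if i = (l - 1, m + 1) then
          complex_of_real (- (q powr (m + l + 1/2) * sqrt (qnum q (l-m-1) * qnum q (l-m)) / qnum q (2*l)))
        else if i = (l, m + 1) then
          complex_of_real (s * ((1 + q\<^sup>2) * q powr (m - 1/2) / (qnum q (2*l) * qnum q (2*l+2)))
                           * sqrt (qnum q (l+m+1) * qnum q (l-m)))
        else 0)
     else 0)"

definition bmat :: "real \<Rightarrow> real \<Rightarrow> (real \<times> real) mat" where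
  "bmat q s = (\<lambda>i j. case j of (l, m) \<Rightarrow>
     if i \<in> HB \<and> j \<in> HB then
       (if i = (l + 1, m) then
          complex_of_real (- (q powr (m + 1) * sqrt (qnum q (l+m+1) * qnum q (l-m+1)) / qnum q (2*l+2)))
        else if i = (l - 1, m) then
          complex_of_real (- (q powr (m + 1) * sqrt (qnum q (l+m) * qnum q (l-m)) / qnum q (2*l)))
        else if i = (l, m) then
          complex_of_real (s * (qnum q (l-m+1) * qnum q (l+m) - q\<^sup>2 * qnum q (l-m) * qnum q (l+m+1))
                           / (qnum q (2*l) * qnum q (2*l+2)))
        else 0)
     else 0)"

text \<open>Every element of the unital *-algebra A(S^2_q) is represented by a
noncommutative polynomial (with complex coefficients) in the generators a, a*, b
(b is self-adjoint, so this set is closed under *).\<close>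
datatype sq_expr = Ga | Gastar | Gb | Scal complex | Plus sq_expr sq_expr | Times sq_expr sq_expr

fun pi_rep :: "real \<Rightarrow> real \<Rightarrow> sq_expr \<Rightarrow> (real \<times> real) mat" where
  "pi_rep q s Ga = amat q s"
| "pi_rep q s Gastar = mat_adj (amat q s)"
| "pi_rep q s Gb = bmat q s"
| "pi_rep q s (Scal c) = mat_scale c (mat_id HB)"
| "pi_rep q s (Plus x y) = mat_add (pi_rep q s x) (pi_rep q s y)"
| "pi_rep q s (Times x y) = mat_mult (pi_rep q s x) (pi_rep q s y)"

definition rho_minus :: "real \<Rightarrow> sq_expr \<Rightarrow> (real \<times> real) mat" where
  "rho_minus q x = mat_scale (1/2) (mat_sub (pi_rep q 1 x) (pi_rep q (-1) x))"

definition rho_plus :: "real \<Rightarrow> sq_expr \<Rightarrow> (real \<times> real) mat" where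
  "rho_plus q x = mat_scale (1/2) (mat_add (pi_rep q 1 x) (pi_rep q (-1) x))"

definition rapid_decay :: "(real \<times> real) mat \<Rightarrow> bool" where
  "rapid_decay T \<longleftrightarrow> (\<forall>p::nat. bdd_above
     ((\<lambda>((l, m), (l', m')). cmod (T (l, m) (l', m')) * (l + l' + 1) ^ p) ` (HB \<times> HB)))"

text \<open>C^2 has basis indexed by bool: True = first, False = second basis vector.\<close>
definition id2 :: "bool mat" where "id2 = (\<lambda>s t. if s = t then 1 else 0)"
definition gamma2 :: "bool mat" where "gamma2 = (\<lambda>s t. if s = t then (if s then 1 else -1) else 0)"
definition F2 :: "bool mat" where "F2 = (\<lambda>s t. if s \<noteq> t then 1 else 0)"

definition HB2 :: "((real \<times> real) \<times> bool) set" where "HB2 = HB \<times> UNIV"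

definition pi_tot :: "real \<Rightarrow> sq_expr \<Rightarrow> ((real \<times> real) \<times> bool) mat" where
  "pi_tot q x = mat_add (mat_tensor (rho_plus q x) id2) (mat_tensor (rho_minus q x) gamma2)"

definition Fop :: "((real \<times> real) \<times> bool) mat" where
  "Fop = mat_tensor (mat_id HB) F2"

definition finite_summable :: "real \<Rightarrow> bool" where
  "finite_summable q \<longleftrightarrow> (\<exists>k::nat. \<forall>xs. length xs = Suc k \<longrightarrow>
     trace_class HB2 (foldr mat_mult (map (\<lambda>x. commutator Fop (pi_tot q x)) xs) (mat_id HB2)))"

end

theory Submission
  imports Defs
begin

context
  fixes q :: real
  assumes q0: "0 < q" and q1: "q < 1"
begin

definition "cq = 1/q - q"

lemma cq_pos: "cq > 0"
proof -
  have "q * q < 1" using mult_strict_mono[of q 1 q 1] q0 q1 by simp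
  then show ?thesis unfolding cq_def using q0 by (simp add: field_simps)
qed

lemma E_anti: "a \<le> b \<Longrightarrow> q powr b \<le> q powr a"
  using powr_mono'[of a b q] q0 q1 by simp

lemma qnum_alt: "qnum q x = (q powr (-x) - q powr x) / cq"
proof -
  have "q - 1/q = - cq" unfolding cq_def by simp
  then show ?thesis unfolding qnum_def by (simp add: minus_divide_left)
qed

lemma qnum_abs_nonneg: assumes "x \<ge> 0" shows "\<bar>qnum q x\<bar> \<le> q powr (-x) / cq"
proof -
  have a: "q powr x \<le> q powr (-x)" using E_anti assms by simp
  have "\<bar>q powr (-x) - q powr x\<bar> \<le> q powr (-x)" using a by simp
  then show ?thesis unfolding qnum_alt using cq_pos by (simp add: divide_right_mono abs_div)
qed

lemma qnum_neg: "qnum q (-x) = - qnum q x"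
  unfolding qnum_def by (simp add: minus_divide_left)

lemma qnum_abs: "\<bar>qnum q x\<bar> \<le> q powr (-\<bar>x\<bar>) / cq"
proof (cases "x \<ge> 0")
  case True then show ?thesis using qnum_abs_nonneg by simp
next
  case False
  then have "\<bar>qnum q (-x)\<bar> \<le> q powr (-(-x)) / cq" using qnum_abs_nonneg[of "-x"] by simp
  then show ?thesis using False by (simp add: qnum_neg)
qed

lemma qnum_abs_le: "\<bar>x\<bar> \<le> y \<Longrightarrow> \<bar>qnum q x\<bar> \<le> q powr (-y) / cq"
proof -
  assume h: "\<bar>x\<bar> \<le> y"
  have "q powr (-\<bar>x\<bar>) \<le> q powr (-y)" using E_anti[of "-y" "-\<bar>x\<bar>"] h by simp
  then have "q powr (-\<bar>x\<bar>) / cq \<le> q powr (-y) / cq" using cq_pos by (simp add: divide_right_mono)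
  then show ?thesis using qnum_abs[of x] by linarith
qed

lemma qnum_lower: assumes "x \<ge> 1" shows "qnum q x \<ge> q powr (1 - x)"
proof -
  have e1: "q powr (1-x) * (1/q) = q powr (-x)" using q0 by (simp add: powr_diff powr_minus_divide)
  have e2: "q powr (1-x) * q = q powr (2-x)" using q0
    by (simp add: powr_diff power2_eq_square)
  have "q powr x \<le> q powr (2-x)" using E_anti assms by simp
  then have "q powr (1-x) * cq \<le> q powr (-x) - q powr x" unfolding cq_def
    using e1 e2 by (simp add: right_diff_distrib)
  then show ?thesis unfolding qnum_alt using cq_pos by (simp add: field_simps)
qed

lemma qnum_pos: "x \<ge> 1 \<Longrightarrow> qnum q x > 0"
proof -
  assume "x \<ge> 1" then have "qnum q x \<ge> q powr (1 - x)" by (rule qnum_lower)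
  moreover have "q powr (1-x) > 0" using q0 by simp
  ultimately show ?thesis by linarith
qed

lemma sqrt_bound:
  assumes "\<bar>x\<bar> \<le> a" "\<bar>y\<bar> \<le> b"
  shows "\<bar>sqrt (qnum q x * qnum q y)\<bar> \<le> q powr (-(a+b)/2) / cq"
proof -
  have "\<bar>qnum q x * qnum q y\<bar> \<le> (q powr (-a)/cq) * (q powr (-b)/cq)"
    unfolding abs_mult using qnum_abs_le[OF assms(1)] qnum_abs_le[OF assms(2)]
    by (intro mult_mono) auto
  also have "\<dots> = (q powr (-(a+b)/2) / cq)^2"
  proof -
    have "(q powr (-(a+b)/2))^2 = q powr (-(a+b)/2 + -(a+b)/2)" unfolding power2_eq_square by (rule powr_add[symmetric])
    also have "\<dots> = q powr (-a) * q powr (-b)" by (simp add: powr_add[symmetric] del: powr_add)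
    finally show ?thesis by (simp add: power_divide power2_eq_square)
  qed
  finally have h: "\<bar>qnum q x * qnum q y\<bar> \<le> (q powr (-(a+b)/2) / cq)^2" .
  have "\<bar>sqrt (qnum q x * qnum q y)\<bar> = sqrt \<bar>qnum q x * qnum q y\<bar>" by (rule real_sqrt_abs'[symmetric])
  also have "\<dots> \<le> sqrt ((q powr (-(a+b)/2) / cq)^2)" using h real_sqrt_le_mono by blast
  also have "\<dots> = q powr (-(a+b)/2) / cq" using cq_pos by simp
  finally show ?thesis .
qed

end

lemma HB_facts: "(l, m) \<in> HB \<Longrightarrow> l \<ge> 1/2 \<and> l + m \<ge> 0 \<and> m \<le> l"
  unfolding HB_def by (auto elim!: Nats_cases)

context
  fixes q :: real
  assumes q0: "0 < q" and q1: "q < 1"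
begin

lemma cqp: "cq q > 0" using cq_pos q0 q1 by blast
lemma Ea: "a \<le> b \<Longrightarrow> q powr b \<le> q powr a" using E_anti q0 q1 by blast

lemma gen1:
  assumes S: "\<bar>S\<bar> \<le> q powr b / cq q" and D: "D \<ge> q powr c" and t: "a + b - c \<ge> t"
  shows "\<bar>q powr a * S / D\<bar> \<le> q powr t / cq q"
proof -
  have "q powr c > 0" using q0 by simp
  then have Dp: "D > 0" using D by linarith
  have "\<bar>q powr a * S / D\<bar> = q powr a * \<bar>S\<bar> / D" using Dp by (simp add: abs_mult)
  also have "\<dots> \<le> q powr a * (q powr b / cq q) / D"
    using S Dp by (intro divide_right_mono mult_left_mono) auto
  also have "\<dots> \<le> q powr a * (q powr b / cq q) / q powr c"
    using D Dp cqp q0 by (intro divide_left_mono) (auto intro: mult_pos_pos)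
  also have "\<dots> = q powr (a + b - c) / cq q" by (simp add: powr_add powr_diff)
  also have "\<dots> \<le> q powr t / cq q" using Ea[OF t] cqp by (simp add: divide_right_mono)
  finally show ?thesis .
qed

lemma den2: "x \<ge> 1 \<Longrightarrow> y \<ge> 1 \<Longrightarrow> qnum q x * qnum q y \<ge> q powr (2 - x - y)"
proof -
  assume x: "x \<ge> 1" and y: "y \<ge> 1"
  have "q powr (1 - x) * q powr (1 - y) \<le> qnum q x * qnum q y"
    using qnum_lower[OF q0 q1 x] qnum_lower[OF q0 q1 y] qnum_pos[OF q0 q1 x] by (intro mult_mono) auto
  moreover have "q powr (1 - x) * q powr (1 - y) = q powr (2 - x - y)"
  proof -
    have eq: "(1-x)+(1-y) = 2-x-y" by simp
    have "q powr (1 - x) * q powr (1 - y) = q powr ((1-x)+(1-y))" by (rule powr_add[symmetric])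
    then show ?thesis unfolding eq .
  qed
  ultimately show ?thesis by simp
qed

lemma A1: assumes "(l, m) \<in> HB"
  shows "\<bar>q powr (m - l - 1/2) * sqrt (qnum q (l+m+1) * qnum q (l+m+2)) / qnum q (2*l+2)\<bar> \<le> q powr (-1) / cq q"
proof (rule gen1)
  show "\<bar>sqrt (qnum q (l+m+1) * qnum q (l+m+2))\<bar> \<le> q powr (-((l+m+1)+(l+m+2))/2) / cq q"
    using HB_facts[OF assms] by (intro sqrt_bound[OF q0 q1]) auto
  show "qnum q (2*l+2) \<ge> q powr (1 - (2*l+2))" using HB_facts[OF assms] by (intro qnum_lower[OF q0 q1]) auto
qed (simp add: field_simps)

lemma A2: assumes "(l, m) \<in> HB"
  shows "\<bar>q powr (m + l + 1/2) * sqrt (qnum q (l-m-1) * qnum q (l-m)) / qnum q (2*l)\<bar> \<le> q powr (-1) / cq q"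
proof (rule gen1)
  show "\<bar>sqrt (qnum q (l-m-1) * qnum q (l-m))\<bar> \<le> q powr (-((l-m+1)+(l-m))/2) / cq q"
    using HB_facts[OF assms] by (intro sqrt_bound[OF q0 q1]) auto
  show "qnum q (2*l) \<ge> q powr (1 - (2*l))" using HB_facts[OF assms] by (intro qnum_lower[OF q0 q1]) auto
qed (use HB_facts[OF assms] in \<open>simp add: field_simps\<close>)

lemma A3: assumes "(l, m) \<in> HB" "\<bar>s\<bar> \<le> 1"
  shows "\<bar>s * ((1 + q\<^sup>2) * q powr (m - 1/2) / (qnum q (2*l) * qnum q (2*l+2))) * sqrt (qnum q (l+m+1) * qnum q (l-m))\<bar>
     \<le> 2 * q powr (2*l - 1) / cq q"
proof -
  have g: "\<bar>q powr (m - 1/2) * sqrt (qnum q (l+m+1) * qnum q (l-m)) / (qnum q (2*l) * qnum q (2*l+2))\<bar> \<le> q powr (2*l - 1) / cq q"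
  proof (rule gen1)
    show "\<bar>sqrt (qnum q (l+m+1) * qnum q (l-m))\<bar> \<le> q powr (-((l+m+1)+(l-m))/2) / cq q"
      using HB_facts[OF assms(1)] by (intro sqrt_bound[OF q0 q1]) auto
    show "qnum q (2*l) * qnum q (2*l+2) \<ge> q powr (2 - 2*l - (2*l+2))" using HB_facts[OF assms(1)] by (intro den2) auto
  qed (use HB_facts[OF assms(1)] in \<open>simp add: field_simps\<close>)
  have qq: "1 + q\<^sup>2 \<le> 2" "0 \<le> 1 + q\<^sup>2" using q0 q1 by (auto simp: power2_eq_square intro: mult_le_one)
  have "\<bar>s * ((1 + q\<^sup>2) * q powr (m - 1/2) / (qnum q (2*l) * qnum q (2*l+2))) * sqrt (qnum q (l+m+1) * qnum q (l-m))\<bar>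
     = \<bar>s\<bar> * (1 + q\<^sup>2) * \<bar>q powr (m - 1/2) * sqrt (qnum q (l+m+1) * qnum q (l-m)) / (qnum q (2*l) * qnum q (2*l+2))\<bar>"
    using qq by (simp add: abs_mult)
  also have "\<dots> \<le> 1 * 2 * (q powr (2*l - 1) / cq q)"
    using g qq assms(2) by (intro mult_mono) auto
  finally show ?thesis by simp
qed

lemma B1: assumes "(l, m) \<in> HB"
  shows "\<bar>q powr (m + 1) * sqrt (qnum q (l+m+1) * qnum q (l-m+1)) / qnum q (2*l+2)\<bar> \<le> q powr 0 / cq q"
proof (rule gen1)
  show "\<bar>sqrt (qnum q (l+m+1) * qnum q (l-m+1))\<bar> \<le> q powr (-((l+m+1)+(l-m+1))/2) / cq q"
    using HB_facts[OF assms] by (intro sqrt_bound[OF q0 q1]) auto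
  show "qnum q (2*l+2) \<ge> q powr (1 - (2*l+2))" using HB_facts[OF assms] by (intro qnum_lower[OF q0 q1]) auto
qed (use HB_facts[OF assms] in \<open>simp add: field_simps\<close>)

lemma B2: assumes "(l, m) \<in> HB"
  shows "\<bar>q powr (m + 1) * sqrt (qnum q (l+m) * qnum q (l-m)) / qnum q (2*l)\<bar> \<le> q powr 0 / cq q"
proof (rule gen1)
  show "\<bar>sqrt (qnum q (l+m) * qnum q (l-m))\<bar> \<le> q powr (-((l+m)+(l-m))/2) / cq q"
    using HB_facts[OF assms] by (intro sqrt_bound[OF q0 q1]) auto
  show "qnum q (2*l) \<ge> q powr (1 - (2*l))" using HB_facts[OF assms] by (intro qnum_lower[OF q0 q1]) auto
  show "(m+1) + (-((l+m)+(l-m))/2) - (1 - 2*l) \<ge> 0" using HB_facts[OF assms] by simp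
qed

lemma B3: assumes "(l, m) \<in> HB" "\<bar>s\<bar> \<le> 1"
  shows "\<bar>s * (qnum q (l-m+1) * qnum q (l+m) - q\<^sup>2 * qnum q (l-m) * qnum q (l+m+1))
                           / (qnum q (2*l) * qnum q (2*l+2))\<bar> \<le> 2 * q powr (2*l - 1) / (cq q)\<^sup>2"
proof -
  note h = HB_facts[OF assms(1)]
  have nn: "\<And>x. 0 \<le> q powr x / cq q" using cqp by simp
  have p1: "\<bar>qnum q (l-m+1) * qnum q (l+m)\<bar> \<le> (q powr (-(l-m+1)) / cq q) * (q powr (-(l+m)) / cq q)"
    unfolding abs_mult using h nn by (intro mult_mono qnum_abs_le[OF q0 q1]) auto
  have p2: "\<bar>qnum q (l-m) * qnum q (l+m+1)\<bar> \<le> (q powr (-(l-m)) / cq q) * (q powr (-(l+m+1)) / cq q)"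
    unfolding abs_mult using h nn by (intro mult_mono qnum_abs_le[OF q0 q1]) auto
  have e: "(q powr (-(l-m+1)) / cq q) * (q powr (-(l+m)) / cq q) = q powr (-(2*l+1)) / (cq q)\<^sup>2"
    "(q powr (-(l-m)) / cq q) * (q powr (-(l+m+1)) / cq q) = q powr (-(2*l+1)) / (cq q)\<^sup>2"
  proof -
    have e1: "q powr (-(l-m+1)) * q powr (-(l+m)) = q powr (-(2*l+1))"
      using powr_add[of q "-(l-m+1)" "-(l+m)"] by (simp add: algebra_simps)
    have e2: "q powr (-(l-m)) * q powr (-(l+m+1)) = q powr (-(2*l+1))"
      using powr_add[of q "-(l-m)" "-(l+m+1)"] by (simp add: algebra_simps)
    have f: "\<And>A B c. (A / c) * (B / c) = (A * B) / (c::real)\<^sup>2" by (simp add: power2_eq_square)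
    show "(q powr (-(l-m+1)) / cq q) * (q powr (-(l+m)) / cq q) = q powr (-(2*l+1)) / (cq q)\<^sup>2"
      unfolding f e1 ..
    show "(q powr (-(l-m)) / cq q) * (q powr (-(l+m+1)) / cq q) = q powr (-(2*l+1)) / (cq q)\<^sup>2"
      unfolding f e2 ..
  qed
  have qq: "q\<^sup>2 \<le> 1" "0 \<le> q\<^sup>2" using q0 q1 by (auto simp: power2_eq_square intro: mult_le_one)
  have p2': "\<bar>q\<^sup>2 * qnum q (l-m) * qnum q (l+m+1)\<bar> \<le> q powr (-(2*l+1)) / (cq q)\<^sup>2"
  proof -
    have "\<bar>q\<^sup>2 * qnum q (l-m) * qnum q (l+m+1)\<bar> = q\<^sup>2 * \<bar>qnum q (l-m) * qnum q (l+m+1)\<bar>"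
      by (simp add: abs_mult)
    also have "\<dots> \<le> 1 * (q powr (-(2*l+1)) / (cq q)\<^sup>2)" using p2 e qq by (intro mult_mono) auto
    finally show ?thesis by simp
  qed
  have N: "\<bar>qnum q (l-m+1) * qnum q (l+m) - q\<^sup>2 * qnum q (l-m) * qnum q (l+m+1)\<bar> \<le> 2 * q powr (-(2*l+1)) / (cq q)\<^sup>2"
    using p1 p2' e by linarith
  have D: "qnum q (2*l) * qnum q (2*l+2) \<ge> q powr (2 - 2*l - (2*l+2))" using h by (intro den2) auto
  have "q powr (2 - 2*l - (2*l+2)) > 0" using q0 by simp
  then have Dp: "qnum q (2*l) * qnum q (2*l+2) > 0" using D by linarith
  have Da: "\<bar>qnum q (2*l) * qnum q (2*l+2)\<bar> = qnum q (2*l) * qnum q (2*l+2)" using Dp by simp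
  have "\<bar>s * (qnum q (l-m+1) * qnum q (l+m) - q\<^sup>2 * qnum q (l-m) * qnum q (l+m+1))
                           / (qnum q (2*l) * qnum q (2*l+2))\<bar>
     = \<bar>s\<bar> * \<bar>qnum q (l-m+1) * qnum q (l+m) - q\<^sup>2 * qnum q (l-m) * qnum q (l+m+1)\<bar> / (qnum q (2*l) * qnum q (2*l+2))"
    unfolding abs_divide Da abs_mult[of s] by (rule refl)
  also have "\<dots> \<le> 1 * (2 * q powr (-(2*l+1)) / (cq q)\<^sup>2) / (qnum q (2*l) * qnum q (2*l+2))"
    using N assms(2) Dp by (intro divide_right_mono mult_mono) auto
  also have "\<dots> \<le> 1 * (2 * q powr (-(2*l+1)) / (cq q)\<^sup>2) / q powr (2 - 2*l - (2*l+2))"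
    using D Dp cqp q0 by (intro divide_left_mono) (auto intro: mult_pos_pos)
  also have "\<dots> = 2 * (q powr (-(2*l+1)) / q powr (2 - 2*l - (2*l+2))) / (cq q)\<^sup>2"
    by simp
  also have "q powr (-(2*l+1)) / q powr (2 - 2*l - (2*l+2)) = q powr (2*l-1)"
  proof -
    have "q powr (-(2*l+1)) / q powr (2 - 2*l - (2*l+2)) = q powr (-(2*l+1) - (2 - 2*l - (2*l+2)))"
      by (rule powr_diff[symmetric])
    also have "-(2*l+1) - (2 - 2*l - (2*l+2)) = 2*l-1" by simp
    finally show ?thesis .
  qed
  finally show ?thesis .
qed

end

definition nb :: "int \<Rightarrow> real \<times> real \<Rightarrow> (real \<times> real) set" where
  "nb K j = (\<lambda>(a, b). (fst j + of_int a, snd j + of_int b)) ` ({-K..K} \<times> {-K..K})"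

definition NK :: "int \<Rightarrow> real" where "NK K = real (card ({-K..K} \<times> {-K..K}))"

lemma nb_finite[simp]: "finite (nb K j)" unfolding nb_def by simp

lemma nb_card: "real (card (nb K j)) \<le> NK K"
  unfolding nb_def NK_def by (rule of_nat_mono[OF card_image_le]) simp

lemma NK_nonneg: "NK K \<ge> 0" unfolding NK_def by simp

lemma nb_mem: "i \<in> nb K j \<longleftrightarrow> (\<exists>a b. \<bar>a\<bar> \<le> K \<and> \<bar>b\<bar> \<le> K \<and> i = (fst j + of_int a, snd j + of_int b))"
  unfolding nb_def by (auto simp: abs_le_iff)

lemma nb_fst: "i \<in> nb K j \<Longrightarrow> fst j - K \<le> fst i \<and> fst i \<le> fst j + K"
  unfolding nb_mem by auto

lemma nb_trans: "i \<in> nb K1 k \<Longrightarrow> k \<in> nb K2 j \<Longrightarrow> i \<in> nb (K1+K2) j"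
  unfolding nb_mem
proof (elim exE conjE)
  fix a b a' b'
  assume h: "\<bar>a\<bar> \<le> K1" "\<bar>b\<bar> \<le> K1" "i = (fst k + real_of_int a, snd k + real_of_int b)"
    "\<bar>a'\<bar> \<le> K2" "\<bar>b'\<bar> \<le> K2" "k = (fst j + real_of_int a', snd j + real_of_int b')"
  show "\<exists>a b. \<bar>a\<bar> \<le> K1 + K2 \<and> \<bar>b\<bar> \<le> K1 + K2 \<and> i = (fst j + real_of_int a, snd j + real_of_int b)"
    by (rule exI[of _ "a + a'"], rule exI[of _ "b + b'"]) (use h in auto)
qed

lemma nb_mono: "K \<le> K' \<Longrightarrow> i \<in> nb K j \<Longrightarrow> i \<in> nb K' j"
  unfolding nb_mem by force

lemma nb_self: "K \<ge> 0 \<Longrightarrow> i \<in> nb K i"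
  unfolding nb_mem by (rule exI[of _ 0], rule exI[of _ 0]) auto

definition band :: "int \<Rightarrow> (real \<times> real) mat \<Rightarrow> bool" where
  "band K M \<longleftrightarrow> (\<forall>i j. M i j \<noteq> 0 \<longrightarrow> i \<in> nb K j \<and> j \<in> nb K i)"

definition bnd :: "real \<Rightarrow> (real \<times> real) mat \<Rightarrow> bool" where
  "bnd B M \<longleftrightarrow> (\<forall>i j. cmod (M i j) \<le> B)"

definition supp :: "(real \<times> real) mat \<Rightarrow> bool" where
  "supp M \<longleftrightarrow> (\<forall>i j. M i j \<noteq> 0 \<longrightarrow> i \<in> HB \<and> j \<in> HB)"

lemma band_mono: "band K M \<Longrightarrow> K \<le> K' \<Longrightarrow> band K' M"
  unfolding band_def using nb_mono by blast

lemma mult_left: assumes "band K M" shows "mat_mult M N i j = (\<Sum>k\<in>nb K i. M i k * N k j)"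
proof -
  have z: "\<And>k. k \<notin> nb K i \<Longrightarrow> M i k = 0" using assms unfolding band_def by blast
  have "mat_mult M N i j = infsum (\<lambda>k. M i k * N k j) (nb K i)"
    unfolding mat_mult_def
    by (rule infsum_cong_neutral) (use z in auto)
  then show ?thesis by simp
qed

lemma mult_right: assumes "band K N" shows "mat_mult M N i j = (\<Sum>k\<in>nb K j. M i k * N k j)"
proof -
  have z: "\<And>k. k \<notin> nb K j \<Longrightarrow> N k j = 0" using assms unfolding band_def by blast
  have "mat_mult M N i j = infsum (\<lambda>k. M i k * N k j) (nb K j)"
    unfolding mat_mult_def
    by (rule infsum_cong_neutral) (use z in auto)
  then show ?thesis by simp
qed

lemma band_mult: assumes "band K1 M" "band K2 N" shows "band (K1+K2) (mat_mult M N)"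
  unfolding band_def
proof (intro allI impI)
  fix i j assume "mat_mult M N i j \<noteq> 0"
  then have "(\<Sum>k\<in>nb K1 i. M i k * N k j) \<noteq> 0" using mult_left[OF assms(1)] by simp
  then obtain k where "M i k * N k j \<noteq> 0" by (meson sum.neutral)
  then have "M i k \<noteq> 0" "N k j \<noteq> 0" by auto
  then have "i \<in> nb K1 k" "k \<in> nb K1 i" "k \<in> nb K2 j" "j \<in> nb K2 k" using assms unfolding band_def by blast+
  then show "i \<in> nb (K1 + K2) j \<and> j \<in> nb (K1 + K2) i"
    using nb_trans[of i K1 k K2 j] nb_trans[of j K2 k K1 i] by (auto simp: add.commute)
qed

lemma supp_mult: assumes "supp M" "supp N" shows "supp (mat_mult M N)"
  unfolding supp_def
proof (intro allI impI)
  fix i j assume h: "mat_mult M N i j \<noteq> 0"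
  have "i \<in> HB"
  proof (rule ccontr)
    assume "i \<notin> HB" then have "\<And>k. M i k = 0" using assms(1) unfolding supp_def by blast
    then have "mat_mult M N i j = 0" unfolding mat_mult_def by (simp add: infsum_0)
    then show False using h by simp
  qed
  moreover have "j \<in> HB"
  proof (rule ccontr)
    assume "j \<notin> HB" then have "\<And>k. N k j = 0" using assms(2) unfolding supp_def by blast
    then have "mat_mult M N i j = 0" unfolding mat_mult_def by (simp add: infsum_0)
    then show False using h by simp
  qed
  ultimately show "i \<in> HB \<and> j \<in> HB" by simp
qed

lemma bnd_nonneg: "bnd B M \<Longrightarrow> B \<ge> 0"
  unfolding bnd_def by (meson norm_ge_zero order_trans)

lemma bnd_mult: assumes "band K M" "bnd B1 M" "bnd B2 N" shows "bnd (NK K * B1 * B2) (mat_mult M N)"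
  unfolding bnd_def
proof (intro allI)
  fix i j
  have "cmod (mat_mult M N i j) = cmod (\<Sum>k\<in>nb K i. M i k * N k j)" using mult_left[OF assms(1)] by simp
  also have "\<dots> \<le> (\<Sum>k\<in>nb K i. cmod (M i k * N k j))" by (rule norm_sum)
  also have "\<dots> \<le> real (card (nb K i)) * (B1 * B2)"
  proof (rule sum_bounded_above)
    fix k
    have hM: "cmod (M i k) \<le> B1" and hN: "cmod (N k j) \<le> B2" using assms(2,3) unfolding bnd_def by blast+
    show "cmod (M i k * N k j) \<le> B1 * B2" unfolding norm_mult
      by (rule mult_mono[OF hM hN]) (use bnd_nonneg[OF assms(2)] in auto)
  qed
  also have "\<dots> \<le> NK K * (B1 * B2)"
    using nb_card bnd_nonneg[OF assms(2)] bnd_nonneg[OF assms(3)] by (intro mult_right_mono) auto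
  finally show "cmod (mat_mult M N i j) \<le> NK K * B1 * B2" by (simp add: mult.assoc)
qed

lemma band_add: "band K M \<Longrightarrow> band K N \<Longrightarrow> band K (mat_add M N)"
  unfolding band_def mat_add_def by (metis add.right_neutral add_0)

lemma supp_add: "supp M \<Longrightarrow> supp N \<Longrightarrow> supp (mat_add M N)"
  unfolding supp_def mat_add_def by (metis add.right_neutral add_0)

lemma bnd_add: "bnd B1 M \<Longrightarrow> bnd B2 N \<Longrightarrow> bnd (B1 + B2) (mat_add M N)"
  unfolding bnd_def mat_add_def by (meson add_mono norm_triangle_ineq order_trans)


context
  fixes q :: real
  assumes q0: "0 < q" and q1: "q < 1"
begin

lemma cqp': "cq q > 0" using cq_pos q0 q1 by blast
lemma Ea': "a \<le> b \<Longrightarrow> q powr b \<le> q powr a" using E_anti q0 q1 by blast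

lemma nb1: assumes "fst i - fst j \<in> {-1,0,1}" "snd i - snd j \<in> {-1,0,1}" shows "i \<in> nb 1 j"
proof -
  have ex: "\<exists>a::int. \<bar>a\<bar> \<le> 1 \<and> x = of_int a" if "x \<in> {-1,0,1}" for x::real
  proof -
    from that consider "x = -1" | "x = 0" | "x = 1" by auto
    then show ?thesis
    proof cases
      case 1 then show ?thesis by (intro exI[of _ "-1"]) simp
    next
      case 2 then show ?thesis by (intro exI[of _ 0]) simp
    next
      case 3 then show ?thesis by (intro exI[of _ 1]) simp
    qed
  qed
  obtain a where a: "\<bar>a\<bar> \<le> 1" "fst i - fst j = of_int a" using ex[OF assms(1)] by blast
  obtain b where b: "\<bar>b\<bar> \<le> 1" "snd i - snd j = of_int b" using ex[OF assms(2)] by blast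
  show ?thesis unfolding nb_mem
    by (rule exI[of _ a], rule exI[of _ b]) (use a b in \<open>auto simp: prod_eq_iff\<close>)
qed

lemma amat_band: "band 1 (amat q s)"
  unfolding band_def
proof (intro allI impI)
  fix i j assume h: "amat q s i j \<noteq> 0"
  obtain l m where j: "j = (l, m)" by fastforce
  have "i = (l+1, m+1) \<or> i = (l-1, m+1) \<or> i = (l, m+1)"
    using h unfolding amat_def j by (auto split: if_splits)
  then show "i \<in> nb 1 j \<and> j \<in> nb 1 i"
    unfolding j by (elim disjE) (auto intro!: nb1)
qed

lemma bmat_band: "band 1 (bmat q s)"
  unfolding band_def
proof (intro allI impI)
  fix i j assume h: "bmat q s i j \<noteq> 0"
  obtain l m where j: "j = (l, m)" by fastforce
  have "i = (l+1, m) \<or> i = (l-1, m) \<or> i = (l, m)"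
    using h unfolding bmat_def j by (auto split: if_splits)
  then show "i \<in> nb 1 j \<and> j \<in> nb 1 i"
    unfolding j by (elim disjE) (auto intro!: nb1)
qed

lemma amat_supp: "supp (amat q s)"
  unfolding supp_def amat_def by (auto split: prod.splits)

lemma bmat_supp: "supp (bmat q s)"
  unfolding supp_def bmat_def by (auto split: prod.splits)

definition "Ba = 2 * (q powr (-1) / cq q)"

lemma if_le: "a \<le> (B::real) \<Longrightarrow> b \<le> B \<Longrightarrow> (if c then a else b) \<le> B" by simp

lemma cmod_diff_real: "cmod (complex_of_real a - complex_of_real b) \<le> \<bar>a\<bar> + \<bar>b\<bar>"
  unfolding of_real_diff[symmetric] norm_of_real by linarith
definition "Ca = 4 * q powr (-1) / cq q"
definition "Bb = q powr 0 / cq q + 2 * q powr (-1) / (cq q)\<^sup>2"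
definition "Cb = 4 * q powr (-1) / (cq q)\<^sup>2"

lemma amat_bnd: assumes s: "\<bar>s\<bar> \<le> 1" shows "bnd Ba (amat q s)"
  unfolding bnd_def
proof (intro allI)
  fix i j :: "real \<times> real"
  obtain l m where j: "j = (l, m)" by fastforce
  have nn: "0 \<le> q powr (-1) / cq q" using cqp' by simp
  show "cmod (amat q s i j) \<le> Ba"
  proof (cases "i \<in> HB \<and> (l, m) \<in> HB")
    case True
    then have hb: "(l, m) \<in> HB" by simp
    have le: "2 * q powr (2*l - 1) / cq q \<le> 2 * (q powr (-1) / cq q)"
    proof -
      have "q powr (2*l-1) \<le> q powr (-1)" using Ea'[of "-1" "2*l-1"] HB_facts[OF hb] by simp
      then have "q powr (2*l-1) / cq q \<le> q powr (-1) / cq q" by (rule divide_right_mono) (use cqp' in simp)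
      moreover have "2 * q powr (2*l - 1) / cq q = 2 * (q powr (2*l-1) / cq q)" by simp
      ultimately show ?thesis by linarith
    qed
    note a1 = A1[OF q0 q1 hb] and a2 = A2[OF q0 q1 hb] and a3 = A3[OF q0 q1 hb s]
    show ?thesis
      unfolding amat_def j prod.case if_P[OF True] if_distrib[of cmod] norm_of_real norm_zero Ba_def
      by (intro if_le) (use a1 a2 a3 le nn in linarith)+
  next
    case False
    then show ?thesis using nn unfolding amat_def j Ba_def by auto
  qed
qed

lemma amat_dec: "cmod (amat q 1 i j - amat q (-1) i j) \<le> Ca * q powr (fst i + fst j)"
proof -
  obtain l m where j: "j = (l, m)" by fastforce
  have nn: "0 \<le> Ca * q powr (fst i + fst j)" using cqp' unfolding Ca_def by simp
  show ?thesis
  proof (cases "i \<in> HB \<and> (l, m) \<in> HB \<and> i = (l, m+1)")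
    case True
    then have hb: "(l, m) \<in> HB" by simp
    note a3 = A3[OF q0 q1 hb, of 1] A3[OF q0 q1 hb, of "-1"]
    have e: "4 * q powr (2*l - 1) / cq q = Ca * q powr (fst i + fst j)"
    proof -
      have ex: "2*l-1 = -1 + (l+l)" by simp
      have "q powr (2*l-1) = q powr (-1) * q powr (l+l)" unfolding ex by (rule powr_add)
      then show ?thesis using True unfolding Ca_def j by simp
    qed
    have c0: "i \<in> HB \<and> (l, m) \<in> HB" and n1: "i \<noteq> (l+1, m+1)" and n2: "i \<noteq> (l-1, m+1)" and c3: "i = (l, m+1)"
      using True by auto
    have "cmod (amat q 1 i j - amat q (-1) i j) \<le> 4 * q powr (2*l - 1) / cq q"
      unfolding amat_def j prod.case if_P[OF c0] if_not_P[OF n1] if_not_P[OF n2] if_P[OF c3]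
      by (rule order_trans[OF cmod_diff_real]) (use a3 in linarith)
    then show ?thesis using e by simp
  next
    case False
    then have "amat q 1 i j - amat q (-1) i j = 0" unfolding amat_def j by auto
    then show ?thesis using nn by simp
  qed
qed

end

lemma adj_band: "band K M \<Longrightarrow> band K (mat_adj M)"
  unfolding band_def mat_adj_def by (metis complex_cnj_zero)

lemma adj_supp: "supp M \<Longrightarrow> supp (mat_adj M)"
  unfolding supp_def mat_adj_def by (metis complex_cnj_zero)

lemma adj_bnd: "bnd B M \<Longrightarrow> bnd B (mat_adj M)"
  unfolding bnd_def mat_adj_def by simp

lemma scal_band: "band 0 (mat_scale c (mat_id HB))"
  unfolding band_def mat_scale_def mat_id_def using nb_self[of 0] by auto

lemma scal_supp: "supp (mat_scale c (mat_id HB))"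
  unfolding supp_def mat_scale_def mat_id_def by auto

lemma scal_bnd: "bnd (cmod c) (mat_scale c (mat_id HB))"
  unfolding bnd_def mat_scale_def mat_id_def by (simp add: norm_mult)

lemma bnd_mono: "bnd B M \<Longrightarrow> B \<le> B' \<Longrightarrow> bnd B' M"
  unfolding bnd_def by (meson order_trans)

context
  fixes q :: real
  assumes q0: "0 < q" and q1: "q < 1"
begin

lemma cqp'': "cq q > 0" using cq_pos q0 q1 by blast
lemma Ea'': "a \<le> b \<Longrightarrow> q powr b \<le> q powr a" using E_anti q0 q1 by blast

lemmas if_le' = if_le[OF q0 q1]
lemmas cmod_diff_real' = cmod_diff_real[OF q0 q1]

lemma bmat_bnd: assumes s: "\<bar>s\<bar> \<le> 1" shows "bnd (Bb q) (bmat q s)"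
  unfolding bnd_def
proof (intro allI)
  fix i j :: "real \<times> real"
  obtain l m where j: "j = (l, m)" by fastforce
  have nn: "0 \<le> q powr 0 / cq q" "0 \<le> q powr (-1) / (cq q)\<^sup>2" using cqp'' by simp_all
  show "cmod (bmat q s i j) \<le> Bb q"
  proof (cases "i \<in> HB \<and> (l, m) \<in> HB")
    case True
    then have hb: "(l, m) \<in> HB" by simp
    have le: "2 * q powr (2*l - 1) / (cq q)\<^sup>2 \<le> 2 * (q powr (-1) / (cq q)\<^sup>2)"
    proof -
      have "q powr (2*l-1) \<le> q powr (-1)" using Ea''[of "-1" "2*l-1"] HB_facts[OF hb] by simp
      then have "q powr (2*l-1) / (cq q)\<^sup>2 \<le> q powr (-1) / (cq q)\<^sup>2" by (rule divide_right_mono) (use cqp'' in simp)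
      moreover have "2 * q powr (2*l - 1) / (cq q)\<^sup>2 = 2 * (q powr (2*l-1) / (cq q)\<^sup>2)" by simp
      ultimately show ?thesis by linarith
    qed
    have ee: "2 * q powr (-1) / (cq q)\<^sup>2 = 2 * (q powr (-1) / (cq q)\<^sup>2)" by simp
    have h0: "q powr 0 / cq q \<le> Bb q" using nn ee unfolding Bb_def[OF q0 q1] by linarith
    have h3: "2 * q powr (2*l - 1) / (cq q)\<^sup>2 \<le> Bb q" using nn ee le unfolding Bb_def[OF q0 q1] by linarith
    have bz: "0 \<le> Bb q" using nn h0 by linarith
    note b1 = B1[OF q0 q1 hb] and b2 = B2[OF q0 q1 hb] and b3 = B3[OF q0 q1 hb s]
    note t1 = order_trans[OF b1 h0] and t2 = order_trans[OF b2 h0] and t3 = order_trans[OF b3 h3]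
    show ?thesis
      unfolding bmat_def j prod.case if_P[OF True] if_distrib[of cmod] norm_of_real norm_zero abs_minus_cancel
      by (intro if_le' t1 t2 t3 bz)
  next
    case False
    then show ?thesis using nn unfolding bmat_def j Bb_def[OF q0 q1] by auto
  qed
qed

lemma bmat_dec: "cmod (bmat q 1 i j - bmat q (-1) i j) \<le> Cb q * q powr (fst i + fst j)"
proof -
  obtain l m where j: "j = (l, m)" by fastforce
  have nn: "0 \<le> Cb q * q powr (fst i + fst j)" using cqp'' unfolding Cb_def[OF q0 q1] by simp
  show ?thesis
  proof (cases "i \<in> HB \<and> (l, m) \<in> HB \<and> i = (l, m)")
    case True
    then have hb: "(l, m) \<in> HB" by simp
    note b3 = B3[OF q0 q1 hb, of 1] B3[OF q0 q1 hb, of "-1"]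
    have e: "4 * q powr (2*l - 1) / (cq q)\<^sup>2 = Cb q * q powr (fst i + fst j)"
    proof -
      have ex: "2*l-1 = -1 + (l+l)" by simp
      have "q powr (2*l-1) = q powr (-1) * q powr (l+l)" unfolding ex by (rule powr_add)
      then show ?thesis using True unfolding Cb_def[OF q0 q1] j by simp
    qed
    have c0: "i \<in> HB \<and> (l, m) \<in> HB" and n1: "i \<noteq> (l+1, m)" and n2: "i \<noteq> (l-1, m)" and c3: "i = (l, m)"
      using True by auto
    have "cmod (bmat q 1 i j - bmat q (-1) i j) \<le> 4 * q powr (2*l - 1) / (cq q)\<^sup>2"
      unfolding bmat_def j prod.case if_P[OF c0] if_not_P[OF n1] if_not_P[OF n2] if_P[OF c3]
      by (rule order_trans[OF cmod_diff_real']) (use b3 in linarith)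
    then show ?thesis using e by simp
  next
    case False
    then have "bmat q 1 i j - bmat q (-1) i j = 0" unfolding bmat_def j by auto
    then show ?thesis using nn by simp
  qed
qed

lemma dec_mult:
  assumes bM1: "band K M1" and bM2: "band K M2" and bN1: "band K N1" 
    and BM2: "bnd B M2" and BN1: "bnd B N1"
    and dM: "\<And>i j. cmod (M1 i j - M2 i j) \<le> C1 * q powr (fst i + fst j)"
    and dN: "\<And>i j. cmod (N1 i j - N2 i j) \<le> C2 * q powr (fst i + fst j)"
    and C1: "C1 \<ge> 0" and C2: "C2 \<ge> 0"
  shows "cmod (mat_mult M1 N1 i j - mat_mult M2 N2 i j)
     \<le> (NK K * ((C1 * B + B * C2) * q powr (- of_int K))) * q powr (fst i + fst j)"
proof -
  have B0: "B \<ge> 0" using bnd_nonneg[OF BM2] .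
  let ?E = "q powr (fst i + fst j)"
  have "mat_mult M1 N1 i j - mat_mult M2 N2 i j
      = (\<Sum>k\<in>nb K i. (M1 i k - M2 i k) * N1 k j + M2 i k * (N1 k j - N2 k j))"
    unfolding mult_left[OF bM1] mult_left[OF bM2] sum_subtractf[symmetric]
    by (rule sum.cong) (auto simp: algebra_simps)
  then have "cmod (mat_mult M1 N1 i j - mat_mult M2 N2 i j)
      \<le> (\<Sum>k\<in>nb K i. cmod ((M1 i k - M2 i k) * N1 k j + M2 i k * (N1 k j - N2 k j)))"
    by (simp add: norm_sum)
  also have "\<dots> \<le> real (card (nb K i)) * ((C1 * B + B * C2) * q powr (- of_int K) * ?E)"
  proof (rule sum_bounded_above)
    fix k assume "k \<in> nb K i"
    have t1: "cmod ((M1 i k - M2 i k) * N1 k j) \<le> C1 * B * q powr (- of_int K) * ?E"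
    proof (cases "N1 k j = 0")
      case True then show ?thesis using C1 B0 by simp
    next
      case False
      then have "k \<in> nb K j" using bN1 unfolding band_def by blast
      then have "fst k \<ge> fst j - K" using nb_fst by blast
      then have "q powr (fst i + fst k) \<le> q powr (- of_int K + (fst i + fst j))" by (intro Ea'') simp
      also have "\<dots> = q powr (- of_int K) * ?E" by (rule powr_add)
      finally have e: "q powr (fst i + fst k) \<le> q powr (- of_int K) * ?E" .
      have "cmod ((M1 i k - M2 i k) * N1 k j) = cmod (M1 i k - M2 i k) * cmod (N1 k j)" by (rule norm_mult)
      also have "\<dots> \<le> (C1 * q powr (fst i + fst k)) * B"
      proof (rule mult_mono)
        show "cmod (N1 k j) \<le> B" using BN1 unfolding bnd_def by blast
      qed (use dM[of i k] C1 in auto)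
      also have "\<dots> \<le> (C1 * (q powr (- of_int K) * ?E)) * B"
        using e C1 B0 by (intro mult_right_mono mult_left_mono) auto
      finally show ?thesis by (simp add: algebra_simps)
    qed
    have t2: "cmod (M2 i k * (N1 k j - N2 k j)) \<le> B * C2 * q powr (- of_int K) * ?E"
    proof (cases "M2 i k = 0")
      case True then show ?thesis using C2 B0 by simp
    next
      case False
      then have "k \<in> nb K i" using bM2 unfolding band_def by blast
      then have "fst k \<ge> fst i - K" using nb_fst by blast
      then have "q powr (fst k + fst j) \<le> q powr (- of_int K + (fst i + fst j))" by (intro Ea'') simp
      also have "\<dots> = q powr (- of_int K) * ?E" by (rule powr_add)
      finally have e: "q powr (fst k + fst j) \<le> q powr (- of_int K) * ?E" .
      have "cmod (M2 i k * (N1 k j - N2 k j)) = cmod (M2 i k) * cmod (N1 k j - N2 k j)" by (rule norm_mult)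
      also have "\<dots> \<le> B * (C2 * q powr (fst k + fst j))"
      proof (rule mult_mono)
        show "cmod (M2 i k) \<le> B" using BM2 unfolding bnd_def by blast
      qed (use dN[of k j] B0 in auto)
      also have "\<dots> \<le> B * (C2 * (q powr (- of_int K) * ?E))"
        using e C2 B0 by (intro mult_right_mono mult_left_mono) auto
      finally show ?thesis by (simp add: algebra_simps)
    qed
    show "cmod ((M1 i k - M2 i k) * N1 k j + M2 i k * (N1 k j - N2 k j)) \<le> (C1 * B + B * C2) * q powr (- of_int K) * ?E"
      using norm_triangle_ineq[of "(M1 i k - M2 i k) * N1 k j" "M2 i k * (N1 k j - N2 k j)"] t1 t2
      by (simp add: algebra_simps)
  qed
  also have "\<dots> \<le> NK K * ((C1 * B + B * C2) * q powr (- of_int K) * ?E)"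
    using nb_card[of K i] C1 C2 B0 by (intro mult_right_mono) auto
  finally show ?thesis by (simp add: algebra_simps)
qed

definition "INV x \<longleftrightarrow> (\<exists>K B C. K \<ge> 0 \<and> C \<ge> 0 \<and>
   (\<forall>s\<in>{1, -1::real}. band K (pi_rep q s x) \<and> bnd B (pi_rep q s x) \<and> supp (pi_rep q s x)) \<and>
   (\<forall>i j. cmod (pi_rep q 1 x i j - pi_rep q (-1) x i j) \<le> C * q powr (fst i + fst j)))"

lemma INV_intro:
  assumes "K \<ge> 0" "C \<ge> 0" "\<And>s. s \<in> {1, -1} \<Longrightarrow> band K (pi_rep q s x)"
    "\<And>s. s \<in> {1, -1} \<Longrightarrow> bnd B (pi_rep q s x)" "\<And>s. s \<in> {1, -1} \<Longrightarrow> supp (pi_rep q s x)"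
    "\<And>i j. cmod (pi_rep q 1 x i j - pi_rep q (-1) x i j) \<le> C * q powr (fst i + fst j)"
  shows "INV x"
  unfolding INV_def using assms by blast

lemma s_abs: "s \<in> {1, -1::real} \<Longrightarrow> \<bar>s\<bar> \<le> 1" by auto

lemma Ca_nn: "Ca q \<ge> 0" unfolding Ca_def[OF q0 q1] using cqp'' by simp
lemma Cb_nn: "Cb q \<ge> 0" unfolding Cb_def[OF q0 q1] using cqp'' by simp

lemma INV_all: "INV x"
proof (induction x)
  case Ga
  show ?case
  proof (rule INV_intro[of 1 "Ca q" _ "Ba q"])
    show "cmod (pi_rep q 1 Ga i j - pi_rep q (-1) Ga i j) \<le> Ca q * q powr (fst i + fst j)" for i j
      unfolding pi_rep.simps by (rule amat_dec[OF q0 q1])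
  next
    fix s :: real assume s: "s \<in> {1, -1}"
    show "band 1 (pi_rep q s Ga)" using amat_band[OF q0 q1] by simp
  next
    fix s :: real assume s: "s \<in> {1, -1}"
    show "bnd (Ba q) (pi_rep q s Ga)" using amat_bnd[OF q0 q1 s_abs[OF s]] by simp
  next
    fix s :: real assume s: "s \<in> {1, -1}"
    show "supp (pi_rep q s Ga)" using amat_supp[OF q0 q1] by simp
  qed (use Ca_nn Cb_nn in simp_all)
next
  case Gastar
  have d: "cmod (mat_adj (amat q 1) i j - mat_adj (amat q (-1)) i j) \<le> Ca q * q powr (fst i + fst j)" for i j
  proof -
    have e: "mat_adj (amat q 1) i j - mat_adj (amat q (-1)) i j = cnj (amat q 1 j i - amat q (-1) j i)"
      by (simp add: mat_adj_def)
    have e2: "cmod (mat_adj (amat q 1) i j - mat_adj (amat q (-1)) i j) = cmod (amat q 1 j i - amat q (-1) j i)"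
      unfolding e complex_mod_cnj ..
    have e3: "fst j + fst i = fst i + fst j" by (rule add.commute)
    show ?thesis using amat_dec[OF q0 q1, of j i] unfolding e2 e3 .
  qed
  show ?case
  proof (rule INV_intro[of 1 "Ca q" _ "Ba q"])
    show "cmod (pi_rep q 1 Gastar i j - pi_rep q (-1) Gastar i j) \<le> Ca q * q powr (fst i + fst j)" for i j
      unfolding pi_rep.simps by (rule d)
  next
    fix s :: real assume s: "s \<in> {1, -1}"
    show "band 1 (pi_rep q s Gastar)" using adj_band[OF amat_band[OF q0 q1]] by simp
  next
    fix s :: real assume s: "s \<in> {1, -1}"
    show "bnd (Ba q) (pi_rep q s Gastar)" using adj_bnd[OF amat_bnd[OF q0 q1 s_abs[OF s]]] by simp
  next
    fix s :: real assume s: "s \<in> {1, -1}"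
    show "supp (pi_rep q s Gastar)" using adj_supp[OF amat_supp[OF q0 q1]] by simp
  qed (use Ca_nn Cb_nn in simp_all)
next
  case Gb
  show ?case
  proof (rule INV_intro[of 1 "Cb q" _ "Bb q"])
    show "cmod (pi_rep q 1 Gb i j - pi_rep q (-1) Gb i j) \<le> Cb q * q powr (fst i + fst j)" for i j
      unfolding pi_rep.simps by (rule bmat_dec)
  next
    fix s :: real assume s: "s \<in> {1, -1}"
    show "band 1 (pi_rep q s Gb)" using bmat_band[OF q0 q1] by simp
  next
    fix s :: real assume s: "s \<in> {1, -1}"
    show "bnd (Bb q) (pi_rep q s Gb)" using bmat_bnd[OF s_abs[OF s]] by simp
  next
    fix s :: real assume s: "s \<in> {1, -1}"
    show "supp (pi_rep q s Gb)" using bmat_supp[OF q0 q1] by simp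
  qed (use Ca_nn Cb_nn in simp_all)
next
  case (Scal c)
  show ?case
  proof (rule INV_intro[of 0 "0" _ "cmod c"])
    show "cmod (pi_rep q 1 (Scal c) i j - pi_rep q (-1) (Scal c) i j) \<le> 0 * q powr (fst i + fst j)" for i j
      by simp
  next
    fix s :: real assume s: "s \<in> {1, -1}"
    show "band 0 (pi_rep q s (Scal c))" using scal_band by simp
  next
    fix s :: real assume s: "s \<in> {1, -1}"
    show "bnd (cmod c) (pi_rep q s (Scal c))" using scal_bnd by simp
  next
    fix s :: real assume s: "s \<in> {1, -1}"
    show "supp (pi_rep q s (Scal c))" using scal_supp by simp
  qed (use Ca_nn Cb_nn in simp_all)
next
  case (Plus x y)
  from Plus.IH(1) obtain K1 B1 C1 where h1: "K1 \<ge> 0" "C1 \<ge> 0"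
    "\<forall>s\<in>{1, -1::real}. band K1 (pi_rep q s x) \<and> bnd B1 (pi_rep q s x) \<and> supp (pi_rep q s x)"
    "\<forall>i j. cmod (pi_rep q 1 x i j - pi_rep q (-1) x i j) \<le> C1 * q powr (fst i + fst j)"
    unfolding INV_def by blast
  from Plus.IH(2) obtain K2 B2 C2 where h2: "K2 \<ge> 0" "C2 \<ge> 0"
    "\<forall>s\<in>{1, -1::real}. band K2 (pi_rep q s y) \<and> bnd B2 (pi_rep q s y) \<and> supp (pi_rep q s y)"
    "\<forall>i j. cmod (pi_rep q 1 y i j - pi_rep q (-1) y i j) \<le> C2 * q powr (fst i + fst j)"
    unfolding INV_def by blast
  have d: "cmod (pi_rep q 1 (Plus x y) i j - pi_rep q (-1) (Plus x y) i j) \<le> (C1 + C2) * q powr (fst i + fst j)" for i j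
  proof -
    have eq: "pi_rep q 1 (Plus x y) i j - pi_rep q (-1) (Plus x y) i j
      = (pi_rep q 1 x i j - pi_rep q (-1) x i j) + (pi_rep q 1 y i j - pi_rep q (-1) y i j)"
      by (simp add: mat_add_def)
    have "cmod (pi_rep q 1 x i j - pi_rep q (-1) x i j) \<le> C1 * q powr (fst i + fst j)" using h1(4) by blast
    moreover have "cmod (pi_rep q 1 y i j - pi_rep q (-1) y i j) \<le> C2 * q powr (fst i + fst j)" using h2(4) by blast
    moreover have "(C1 + C2) * q powr (fst i + fst j) = C1 * q powr (fst i + fst j) + C2 * q powr (fst i + fst j)"
      by (rule distrib_right)
    ultimately show ?thesis unfolding eq using norm_triangle_ineq[of "pi_rep q 1 x i j - pi_rep q (-1) x i j" "pi_rep q 1 y i j - pi_rep q (-1) y i j"]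
      by linarith
  qed
  show ?case unfolding INV_def
  proof (rule exI[of _ "max K1 K2"], rule exI[of _ "B1 + B2"], rule exI[of _ "C1 + C2"], intro conjI ballI)
    fix s :: real assume s: "s \<in> {1, -1}"
    have a1: "band K1 (pi_rep q s x)" "bnd B1 (pi_rep q s x)" "supp (pi_rep q s x)" using h1(3) s by blast+
    have a2: "band K2 (pi_rep q s y)" "bnd B2 (pi_rep q s y)" "supp (pi_rep q s y)" using h2(3) s by blast+
    show "band (max K1 K2) (pi_rep q s (Plus x y))" unfolding pi_rep.simps
      by (rule band_add; rule band_mono) (use a1 a2 in auto)
    show "bnd (B1 + B2) (pi_rep q s (Plus x y))" unfolding pi_rep.simps by (rule bnd_add[OF a1(2) a2(2)])
    show "supp (pi_rep q s (Plus x y))" unfolding pi_rep.simps by (rule supp_add[OF a1(3) a2(3)])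
  next
    show "\<forall>i j. cmod (pi_rep q 1 (Plus x y) i j - pi_rep q (-1) (Plus x y) i j) \<le> (C1 + C2) * q powr (fst i + fst j)"
      using d by blast
  qed (use h1(1,2) h2(1,2) in auto)
next
  case (Times x y)
  from Times.IH(1) obtain K1 B1 C1 where h1: "K1 \<ge> 0" "C1 \<ge> 0"
    "\<forall>s\<in>{1, -1::real}. band K1 (pi_rep q s x) \<and> bnd B1 (pi_rep q s x) \<and> supp (pi_rep q s x)"
    "\<forall>i j. cmod (pi_rep q 1 x i j - pi_rep q (-1) x i j) \<le> C1 * q powr (fst i + fst j)"
    unfolding INV_def by blast
  from Times.IH(2) obtain K2 B2 C2 where h2: "K2 \<ge> 0" "C2 \<ge> 0"
    "\<forall>s\<in>{1, -1::real}. band K2 (pi_rep q s y) \<and> bnd B2 (pi_rep q s y) \<and> supp (pi_rep q s y)"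
    "\<forall>i j. cmod (pi_rep q 1 y i j - pi_rep q (-1) y i j) \<le> C2 * q powr (fst i + fst j)"
    unfolding INV_def by blast
  define K where "K = max K1 K2"
  define B where "B = max B1 B2"
  have bx: "band K (pi_rep q s x)" "bnd B (pi_rep q s x)" "supp (pi_rep q s x)" if "s \<in> {1, -1}" for s
  proof -
    have a1: "band K1 (pi_rep q s x)" "bnd B1 (pi_rep q s x)" "supp (pi_rep q s x)" using h1(3) that by blast+
    show "band K (pi_rep q s x)" by (rule band_mono[OF a1(1)]) (simp add: K_def)
    show "bnd B (pi_rep q s x)" by (rule bnd_mono[OF a1(2)]) (simp add: B_def)
    show "supp (pi_rep q s x)" by (rule a1(3))
  qed
  have by': "band K (pi_rep q s y)" "bnd B (pi_rep q s y)" "supp (pi_rep q s y)" if "s \<in> {1, -1}" for s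
  proof -
    have a1: "band K2 (pi_rep q s y)" "bnd B2 (pi_rep q s y)" "supp (pi_rep q s y)" using h2(3) that by blast+
    show "band K (pi_rep q s y)" by (rule band_mono[OF a1(1)]) (simp add: K_def)
    show "bnd B (pi_rep q s y)" by (rule bnd_mono[OF a1(2)]) (simp add: B_def)
    show "supp (pi_rep q s y)" by (rule a1(3))
  qed
  have B0: "B \<ge> 0" using bnd_nonneg[OF bx(2)[of 1]] by simp
  have K0: "K \<ge> 0" using h1(1) unfolding K_def by simp
  let ?C = "NK K * ((C1 * B + B * C2) * q powr (- of_int K))"
  have C0: "?C \<ge> 0" using NK_nonneg h1(2) h2(2) B0 by simp
  have d: "cmod (pi_rep q 1 (Times x y) i j - pi_rep q (-1) (Times x y) i j) \<le> ?C * q powr (fst i + fst j)" for i j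
    unfolding pi_rep.simps
  proof (rule dec_mult[OF bx(1)[of 1] bx(1)[of "-1"] by'(1)[of 1] bx(2)[of "-1"] by'(2)[of 1]])
    show "cmod (pi_rep q 1 x i j - pi_rep q (- 1) x i j) \<le> C1 * q powr (fst i + fst j)" for i j using h1(4) by blast
    show "cmod (pi_rep q 1 y i j - pi_rep q (- 1) y i j) \<le> C2 * q powr (fst i + fst j)" for i j using h2(4) by blast
  qed (use h1(2) h2(2) in simp_all)
  show ?case unfolding INV_def
  proof (rule exI[of _ "K + K"], rule exI[of _ "NK K * B * B"], rule exI[of _ ?C], intro conjI ballI)
    fix s :: real assume s: "s \<in> {1, -1}"
    show "band (K + K) (pi_rep q s (Times x y))" unfolding pi_rep.simps by (rule band_mult[OF bx(1)[OF s] by'(1)[OF s]])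
    show "bnd (NK K * B * B) (pi_rep q s (Times x y))" unfolding pi_rep.simps by (rule bnd_mult[OF bx(1)[OF s] bx(2)[OF s] by'(2)[OF s]])
    show "supp (pi_rep q s (Times x y))" unfolding pi_rep.simps by (rule supp_mult[OF bx(3)[OF s] by'(3)[OF s]])
  next
    show "\<forall>i j. cmod (pi_rep q 1 (Times x y) i j - pi_rep q (-1) (Times x y) i j) \<le> ?C * q powr (fst i + fst j)"
      using d by blast
  qed (use K0 C0 in auto)
qed

end

lemma poly_exp_bound:
  fixes q :: real
  assumes q0: "0 < q" and q1: "q < 1"
  shows "\<exists>G. \<forall>x\<ge>0. (x + 1) ^ p * q powr x \<le> G"
proof -
  define t where "t = - ln q"
  have t0: "t > 0" unfolding t_def using q0 q1 by simp
  define u where "u = t / (real p + 1)"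
  have u0: "u > 0" unfolding u_def using t0 by simp
  define c where "c = min 1 u"
  have c0: "c > 0" unfolding c_def using u0 by simp
  have "(x + 1) ^ p * q powr x \<le> 1 / c ^ p" if x: "x \<ge> 0" for x
  proof -
    have c1: "c \<le> 1" "c \<le> u" unfolding c_def by simp_all
    have "c * x \<le> u * x" using c1(2) x by (rule mult_right_mono)
    then have "c * (1 + x) \<le> 1 + u * x" using c1(1) by (simp add: distrib_left)
    also have "\<dots> \<le> exp (u * x)" by (rule exp_ge_add_one_self)
    finally have h: "c * (1 + x) \<le> exp (u * x)" .
    have "(c * (1 + x)) ^ p \<le> exp (u * x) ^ p"
      using h c0 x by (intro power_mono) auto
    also have "\<dots> = exp (real p * (u * x))" by (rule exp_of_nat_mult[symmetric])
    also have "\<dots> \<le> exp (t * x)"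
    proof -
      have "real p * u \<le> t" unfolding u_def using t0 by (simp add: field_simps)
      then have "real p * u * x \<le> t * x" using x by (intro mult_right_mono) auto
      then show ?thesis by (simp add: mult.assoc)
    qed
    finally have h2: "c ^ p * (x + 1) ^ p \<le> exp (t * x)" by (simp add: power_mult_distrib add.commute)
    have qx: "q powr x = exp (- (t * x))" unfolding t_def powr_def using q0 by (simp add: mult.commute)
    have "c ^ p * ((x + 1) ^ p * q powr x) \<le> exp (t * x) * exp (- (t * x))"
      unfolding qx mult.assoc[symmetric] by (rule mult_right_mono[OF h2]) simp
    also have "\<dots> = 1" by (simp add: exp_minus_inverse)
    finally show ?thesis using c0 by (simp add: field_simps)
  qed
  then show ?thesis by blast
qed

lemma infsum_single_pt:
  assumes "\<And>k. k \<noteq> a \<Longrightarrow> f k = 0"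
  shows "infsum f UNIV = f a"
proof -
  have "infsum f UNIV = infsum f {a}"
    by (rule infsum_cong_neutral) (use assms in auto)
  then show ?thesis by simp
qed

lemma Fop_left: "mat_mult Fop P (i, s) (j, t) = (if i \<in> HB then P (i, \<not> s) (j, t) else 0)"
proof -
  have "mat_mult Fop P (i, s) (j, t) = (\<lambda>k. Fop (i, s) k * P k (j, t)) (i, \<not> s)"
    unfolding mat_mult_def
    by (rule infsum_single_pt) (auto simp: Fop_def mat_tensor_def mat_id_def F2_def split: if_splits)
  then show ?thesis by (simp add: Fop_def mat_tensor_def mat_id_def F2_def)
qed

lemma Fop_right: "mat_mult P Fop (i, s) (j, t) = (if j \<in> HB then P (i, s) (j, \<not> t) else 0)"
proof -
  have "mat_mult P Fop (i, s) (j, t) = (\<lambda>k. P (i, s) k * Fop k (j, t)) (j, \<not> t)"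
    unfolding mat_mult_def
    by (rule infsum_single_pt) (auto simp: Fop_def mat_tensor_def mat_id_def F2_def split: if_splits)
  then show ?thesis by (simp add: Fop_def mat_tensor_def mat_id_def F2_def)
qed

lemma F2g: "mat_mult F2 gamma2 s t = gamma2 (\<not> s) t"
proof -
  have "mat_mult F2 gamma2 s t = (\<lambda>b. F2 s b * gamma2 b t) (\<not> s)"
    unfolding mat_mult_def by (rule infsum_single_pt) (auto simp: F2_def)
  then show ?thesis by (simp add: F2_def)
qed

lemma comm_gen:
  assumes R: "supp R" and M: "supp M"
  shows "commutator Fop (mat_add (mat_tensor R id2) (mat_tensor M gamma2)) = mat_scale 2 (mat_tensor M (mat_mult F2 gamma2))"
proof (intro ext)
  fix x y :: "(real \<times> real) \<times> bool"
  obtain i s where x: "x = (i, s)" by fastforce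
  obtain j t where y: "y = (j, t)" by fastforce
  show "commutator Fop (mat_add (mat_tensor R id2) (mat_tensor M gamma2)) x y = mat_scale 2 (mat_tensor M (mat_mult F2 gamma2)) x y"
  proof (cases "i \<in> HB \<and> j \<in> HB")
    case True
    then show ?thesis unfolding x y commutator_def mat_sub_def Fop_left Fop_right mat_tensor_def F2g
      by (cases s; cases t) (simp_all add: mat_add_def mat_tensor_def mat_scale_def id2_def gamma2_def)
  next
    case False
    then have "R i j = 0" "M i j = 0" using R M unfolding supp_def by blast+
    then show ?thesis unfolding x y commutator_def mat_sub_def Fop_left Fop_right
      by (simp add: mat_add_def mat_tensor_def mat_scale_def)
  qed
qed


definition gw :: "real \<Rightarrow> real \<times> real \<Rightarrow> real" where
  "gw q i = q powr ((2 * fst i + snd i) / 8)"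

lemma HB_decomp: assumes "i \<in> HB"
  shows "fst i = real (nat \<lfloor>fst i\<rfloor>) + 1/2" "fst i + snd i = real (nat \<lfloor>fst i + snd i\<rfloor>)"
proof -
  obtain n k where n: "fst i - 1/2 = real n" and k: "fst i + snd i = real k"
    using assms unfolding HB_def by (auto elim!: Nats_cases)
  have "\<lfloor>fst i\<rfloor> = int n"
  proof -
    have "fst i = real n + 1/2" using n by simp
    then show ?thesis by (simp add: floor_eq_iff)
  qed
  then show "fst i = real (nat \<lfloor>fst i\<rfloor>) + 1/2" using n by simp
  show "fst i + snd i = real (nat \<lfloor>fst i + snd i\<rfloor>)" using k by simp
qed

lemma subset_fst_snd: "A \<subseteq> fst ` A \<times> snd ` A" by force

lemma geo_sum_le:
  fixes r :: real assumes "0 \<le> r" "r < 1" "finite A"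
  shows "(\<Sum>n\<in>A. r ^ n) \<le> 1 / (1 - r)"
proof -
  have "(\<Sum>n\<in>A. r ^ n) \<le> suminf (\<lambda>n. r ^ n)"
    by (rule sum_le_suminf) (use assms in \<open>auto intro: summable_geometric\<close>)
  also have "\<dots> = 1 / (1 - r)" using assms by (intro suminf_geometric) simp
  finally show ?thesis .
qed

lemma gw_sum_bound:
  assumes q0: "0 < q" and q1: "q < 1"
  shows "\<exists>Gs. \<forall>G. finite G \<and> G \<subseteq> HB \<longrightarrow> (\<Sum>i\<in>G. gw q i) \<le> Gs"
proof -
  define r where "r = q powr (1/8)"
  have r0: "0 < r" unfolding r_def using q0 by simp
  have r1: "r < 1" unfolding r_def using q0 q1 by (metis powr_less_mono2 powr_one_eq_one zero_less_divide_1_iff zero_less_numeral less_eq_real_def)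
  define \<phi> where "\<phi> = (\<lambda>i::real \<times> real. (nat \<lfloor>fst i\<rfloor>, nat \<lfloor>fst i + snd i\<rfloor>))"
  have inj: "inj_on \<phi> HB"
  proof (rule inj_onI)
    fix i i' assume h: "i \<in> HB" "i' \<in> HB" "\<phi> i = \<phi> i'"
    have a: "nat \<lfloor>fst i\<rfloor> = nat \<lfloor>fst i'\<rfloor>" "nat \<lfloor>fst i + snd i\<rfloor> = nat \<lfloor>fst i' + snd i'\<rfloor>"
      using h(3) unfolding \<phi>_def by simp_all
    have "fst i = fst i'" by (metis HB_decomp(1) h(1) h(2) a(1))
    moreover have "fst i + snd i = fst i' + snd i'" by (metis HB_decomp(2) h(1) h(2) a(2))
    ultimately show "i = i'" by (simp add: prod_eq_iff)
  qed
  have gle: "gw q i \<le> r ^ fst (\<phi> i) * r ^ snd (\<phi> i)" if "i \<in> HB" for i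
  proof -
    have e: "2 * fst i + snd i = real (fst (\<phi> i)) + real (snd (\<phi> i)) + 1/2"
    proof -
      have "real (fst (\<phi> i)) = real (nat \<lfloor>fst i\<rfloor>)" "real (snd (\<phi> i)) = real (nat \<lfloor>fst i + snd i\<rfloor>)"
        by (simp only: \<phi>_def fst_conv snd_conv)+
      then show ?thesis using HB_decomp[OF that] by linarith
    qed
    have "gw q i = q powr ((real (fst (\<phi> i)) + real (snd (\<phi> i)) + 1/2) / 8)" unfolding gw_def e ..
    also have "\<dots> \<le> q powr ((real (fst (\<phi> i)) + real (snd (\<phi> i))) / 8)"
      using E_anti[OF q0 q1] by simp
    also have "\<dots> = r powr (real (fst (\<phi> i))) * r powr (real (snd (\<phi> i)))"
      unfolding r_def powr_powr powr_add[symmetric] by (simp add: add_divide_distrib)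
    also have "\<dots> = r ^ fst (\<phi> i) * r ^ snd (\<phi> i)" using r0 by (simp add: powr_realpow)
    finally show ?thesis .
  qed
  have "(\<Sum>i\<in>G. gw q i) \<le> (1 / (1 - r)) * (1 / (1 - r))" if G: "finite G" "G \<subseteq> HB" for G
  proof -
    let ?h = "\<lambda>p::nat \<times> nat. r ^ fst p * r ^ snd p"
    have ig: "inj_on \<phi> G" using inj G(2) by (rule inj_on_subset)
    have "(\<Sum>i\<in>G. gw q i) \<le> (\<Sum>i\<in>G. ?h (\<phi> i))" using gle G(2) by (intro sum_mono) auto
    also have "\<dots> = (\<Sum>p\<in>\<phi> ` G. ?h p)" by (simp add: sum.reindex[OF ig])
    also have "\<dots> \<le> (\<Sum>p\<in>fst ` \<phi> ` G \<times> snd ` \<phi> ` G. ?h p)"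
    proof (rule sum_mono2)
      show "\<phi> ` G \<subseteq> fst ` \<phi> ` G \<times> snd ` \<phi> ` G" by (rule subset_fst_snd)
    qed (use G r0 in auto)
    also have "\<dots> = (\<Sum>n\<in>fst ` \<phi> ` G. r ^ n) * (\<Sum>k\<in>snd ` \<phi> ` G. r ^ k)"
      by (simp add: sum_product sum.cartesian_product case_prod_beta)
    also have "\<dots> \<le> (1 / (1 - r)) * (1 / (1 - r))"
      using r0 r1 G by (intro mult_mono geo_sum_le sum_nonneg) auto
    finally show ?thesis .
  qed
  then show ?thesis by blast
qed


definition g2 :: "real \<Rightarrow> (real \<times> real) \<times> bool \<Rightarrow> real" where
  "g2 q x = gw q (fst x)"

lemma g2_nn: "0 < q \<Longrightarrow> g2 q x \<ge> 0" unfolding g2_def gw_def by simp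

lemma g2_sum_bound:
  assumes q0: "0 < q" and q1: "q < 1"
  shows "\<exists>Gs. Gs \<ge> 0 \<and> (\<forall>G. finite G \<and> G \<subseteq> HB2 \<longrightarrow> (\<Sum>x\<in>G. g2 q x) \<le> Gs)"
proof -
  obtain Gs where Gs: "\<And>G. finite G \<Longrightarrow> G \<subseteq> HB \<Longrightarrow> (\<Sum>i\<in>G. gw q i) \<le> Gs"
    using gw_sum_bound[OF q0 q1] by blast
  have Gs0: "Gs \<ge> 0" using Gs[of "{}"] by simp
  have "(\<Sum>x\<in>G. g2 q x) \<le> 2 * Gs" if G: "finite G" "G \<subseteq> HB2" for G
  proof -
    have "(\<Sum>x\<in>G. g2 q x) \<le> (\<Sum>x\<in>fst ` G \<times> (UNIV :: bool set). g2 q x)"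
    proof (rule sum_mono2)
      show "G \<subseteq> fst ` G \<times> (UNIV :: bool set)" by force
    qed (use G g2_nn[OF q0] in auto)
    also have "\<dots> = (\<Sum>i\<in>fst ` G. \<Sum>b\<in>(UNIV :: bool set). g2 q (i, b))"
      by (simp add: sum.cartesian_product)
    also have "\<dots> = (\<Sum>i\<in>fst ` G. 2 * gw q i)"
      by (simp add: g2_def UNIV_bool)
    also have "\<dots> = 2 * (\<Sum>i\<in>fst ` G. gw q i)" by (simp add: sum_distrib_left)
    also have "\<dots> \<le> 2 * Gs"
    proof -
      have "fst ` G \<subseteq> HB" using G(2) unfolding HB2_def by force
      then show ?thesis using Gs[of "fst ` G"] G(1) by simp
    qed
    finally show ?thesis .
  qed
  then show ?thesis using Gs0 by (intro exI[of _ "2 * Gs"]) auto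
qed

lemma summ_HB2:
  assumes q0: "0 < q" and q1: "q < 1"
    and f: "\<And>x y. x \<in> HB2 \<Longrightarrow> y \<in> HB2 \<Longrightarrow> f (x, y) \<le> K * g2 q x * g2 q y"
    and fnn: "\<And>z. f z \<ge> 0" and K: "K \<ge> 0"
  shows "f summable_on (HB2 \<times> HB2)"
proof (rule nonneg_bdd_above_summable_on)
  show "\<And>x. x \<in> HB2 \<times> HB2 \<Longrightarrow> 0 \<le> f x" using fnn by blast
  obtain Gs where Gs0: "Gs \<ge> 0" and Gs: "\<And>G. finite G \<Longrightarrow> G \<subseteq> HB2 \<Longrightarrow> (\<Sum>x\<in>G. g2 q x) \<le> Gs"
    using g2_sum_bound[OF q0 q1] by blast
  show "bdd_above (sum f ` {F. F \<subseteq> HB2 \<times> HB2 \<and> finite F})"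
  proof (rule bdd_aboveI2)
    fix F assume "F \<in> {F. F \<subseteq> HB2 \<times> HB2 \<and> finite F}"
    then have F: "F \<subseteq> HB2 \<times> HB2" "finite F" by auto
    have s1: "fst ` F \<subseteq> HB2" "snd ` F \<subseteq> HB2" using F(1) by auto
    have "sum f F \<le> (\<Sum>z\<in>F. K * g2 q (fst z) * g2 q (snd z))"
      using F f by (intro sum_mono) (auto simp: subset_iff)
    also have "\<dots> \<le> (\<Sum>z\<in>fst ` F \<times> snd ` F. K * g2 q (fst z) * g2 q (snd z))"
    proof (rule sum_mono2)
      show "F \<subseteq> fst ` F \<times> snd ` F" by (rule subset_fst_snd)
    qed (use F K g2_nn[OF q0] in auto)
    also have "\<dots> = K * (\<Sum>z\<in>fst ` F \<times> snd ` F. g2 q (fst z) * g2 q (snd z))"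
      by (simp add: sum_distrib_left mult.assoc)
    also have "K * (\<Sum>z\<in>fst ` F \<times> snd ` F. g2 q (fst z) * g2 q (snd z)) = K * ((\<Sum>x\<in>fst ` F. g2 q x) * (\<Sum>y\<in>snd ` F. g2 q y))"
      by (simp add: sum_product sum.cartesian_product case_prod_beta)
    also have "\<dots> \<le> K * (Gs * Gs)"
    proof (rule mult_left_mono[OF _ K])
      show "(\<Sum>x\<in>fst ` F. g2 q x) * (\<Sum>y\<in>snd ` F. g2 q y) \<le> Gs * Gs"
        by (rule mult_mono) (use Gs[of "fst ` F"] Gs[of "snd ` F"] s1 F(2) Gs0 g2_nn[OF q0] in \<open>auto intro: sum_nonneg\<close>)
    qed
    finally show "sum f F \<le> K * (Gs * Gs)" .
  qed
qed

lemma Epow2: "(q powr a)\<^sup>2 = q powr (2 * (a::real))" for q :: real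
proof -
  have "(q powr a)\<^sup>2 = q powr (a + a)" unfolding power2_eq_square by (rule powr_add[symmetric])
  then show ?thesis by simp
qed

lemma HB2_iff: "x \<in> HB2 \<longleftrightarrow> fst x \<in> HB" unfolding HB2_def by (cases x) auto

lemma TC:
  assumes q0: "0 < q" and q1: "q < 1" and M: "supp M" and C: "C \<ge> 0"
    and Mb: "\<And>i j. cmod (M i j) \<le> C * q powr (fst i + fst j)"
  shows "trace_class HB2 (mat_scale 2 (mat_tensor M (mat_mult F2 gamma2)))"
proof -
  define T where "T = mat_scale 2 (mat_tensor M (mat_mult F2 gamma2))"
  define w where "w i = q powr ((2 * fst i + snd i) / 4)" for i :: "real \<times> real"
  have wpos: "w i > 0" for i unfolding w_def using q0 by simp
  define A :: "((real \<times> real) \<times> bool) mat" where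
    "A = (\<lambda>x y. if x = y \<and> fst x \<in> HB then complex_of_real (w (fst x)) else 0)"
  define Cm :: "((real \<times> real) \<times> bool) mat" where
    "Cm = (\<lambda>x y. complex_of_real (1 / w (fst x)) * T x y)"
  have Tentry: "T (i, s) (j, t) = 2 * (M i j * gamma2 (\<not> s) t)" for i s j t
    unfolding T_def by (simp add: mat_scale_def mat_tensor_def F2g)
  have Tb: "cmod (T x y) \<le> 2 * C * q powr (fst (fst x) + fst (fst y))" for x y
  proof -
    obtain i s where x: "x = (i, s)" by fastforce
    obtain j t where y: "y = (j, t)" by fastforce
    have g: "cmod (gamma2 (\<not> s) t) \<le> 1" unfolding gamma2_def by auto
    have "cmod (T x y) = 2 * (cmod (M i j) * cmod (gamma2 (\<not> s) t))"
      unfolding x y Tentry by (simp add: norm_mult)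
    also have "\<dots> \<le> 2 * (C * q powr (fst i + fst j) * 1)"
      using Mb[of i j] g C by (intro mult_left_mono mult_mono) auto
    finally show ?thesis unfolding x y by simp
  qed
  have Tz: "T x y \<noteq> 0 \<Longrightarrow> fst x \<in> HB \<and> fst y \<in> HB" for x y
  proof -
    assume h: "T x y \<noteq> 0"
    obtain i s where x: "x = (i, s)" by fastforce
    obtain j t where y: "y = (j, t)" by fastforce
    have "M i j \<noteq> 0" using h unfolding x y Tentry by auto
    then have "i \<in> HB \<and> j \<in> HB" using M unfolding supp_def by blast
    then show ?thesis unfolding x y by simp
  qed
  have prod: "T = mat_mult A Cm"
  proof (intro ext)
    fix x y
    have "mat_mult A Cm x y = (\<lambda>k. A x k * Cm k y) x"
      unfolding mat_mult_def by (rule infsum_single_pt) (auto simp: A_def)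
    also have "\<dots> = T x y"
    proof (cases "fst x \<in> HB")
      case True
      have "complex_of_real (w (fst x)) * complex_of_real (1 / w (fst x)) = 1"
        using wpos[of "fst x"] by (simp flip: of_real_mult)
      then show ?thesis using True wpos[of "fst x"] unfolding A_def Cm_def by (simp add: mult.assoc[symmetric])
    next
      case False
      then show ?thesis using Tz[of x y] unfolding A_def Cm_def by auto
    qed
    finally show "T x y = mat_mult A Cm x y" by simp
  qed
  have hsA: "hilbert_schmidt HB2 A"
    unfolding hilbert_schmidt_def
  proof (intro conjI allI impI)
    fix x y assume "x \<notin> HB2 \<or> y \<notin> HB2"
    then show "A x y = 0" unfolding A_def HB2_iff by auto
  next
    show "(\<lambda>(x, y). (cmod (A x y))\<^sup>2) summable_on HB2 \<times> HB2"
    proof (rule summ_HB2[OF q0 q1, of _ 1])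
      fix x y assume xy: "x \<in> HB2" "y \<in> HB2"
      show "(case (x, y) of (x, y) \<Rightarrow> (cmod (A x y))\<^sup>2) \<le> 1 * g2 q x * g2 q y"
      proof (cases "x = y \<and> fst x \<in> HB")
        case True
        obtain l m where lm: "fst x = (l, m)" by fastforce
        have hf: "l \<ge> 1/2" "l + m \<ge> 0" "m \<le> l" using HB_facts True lm by auto
        have xy': "x = y" "fst y \<in> HB" using True by auto
        have "(cmod (A x y))\<^sup>2 = (w (fst x))\<^sup>2" unfolding A_def using xy' wpos[of "fst x"] by simp
        also have "\<dots> = q powr ((2 * l + m) / 2)" unfolding w_def lm Epow2
          by (rule arg_cong[where f="\<lambda>e. q powr e"]) (simp add: field_simps)
        also have "\<dots> \<le> q powr ((2 * l + m) / 8 + (2 * l + m) / 8)" using hf by (intro E_anti[OF q0 q1]) simp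
        also have "\<dots> = q powr ((2 * l + m) / 8) * q powr ((2 * l + m) / 8)" by (rule powr_add)
        also have "\<dots> = g2 q x * g2 q y" unfolding g2_def gw_def using xy'(1) lm by simp
        finally show ?thesis by simp
      next
        case False
        then show ?thesis unfolding A_def using g2_nn[OF q0, of x] g2_nn[OF q0, of y] by auto
      qed
    qed auto
  qed
  have hsC: "hilbert_schmidt HB2 Cm"
    unfolding hilbert_schmidt_def
  proof (intro conjI allI impI)
    fix x y assume "x \<notin> HB2 \<or> y \<notin> HB2"
    then show "Cm x y = 0" unfolding Cm_def HB2_iff using Tz[of x y] by auto
  next
    show "(\<lambda>(x, y). (cmod (Cm x y))\<^sup>2) summable_on HB2 \<times> HB2"
    proof (rule summ_HB2[OF q0 q1, of _ "4 * C\<^sup>2"])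
      fix x y assume xy: "x \<in> HB2" "y \<in> HB2"
      obtain l m where lm: "fst x = (l, m)" by fastforce
      obtain l' m' where lm': "fst y = (l', m')" by fastforce
      have hf: "l \<ge> 1/2" "l + m \<ge> 0" "m \<le> l" using HB_facts xy lm unfolding HB2_iff by auto
      have hf': "l' \<ge> 1/2" "l' + m' \<ge> 0" "m' \<le> l'" using HB_facts xy lm' unfolding HB2_iff by auto
      have wx: "w (fst x) = q powr ((2 * l + m) / 4)" unfolding w_def lm by simp
      have "(cmod (Cm x y))\<^sup>2 = (1 / w (fst x))\<^sup>2 * (cmod (T x y))\<^sup>2"
        unfolding Cm_def norm_mult norm_of_real power_mult_distrib using wpos[of "fst x"] by simp
      also have "\<dots> \<le> (1 / w (fst x))\<^sup>2 * (2 * C * q powr (l + l'))\<^sup>2"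
        using Tb[of x y] unfolding lm lm' by (intro mult_left_mono power_mono) auto
      also have "\<dots> = 4 * C\<^sup>2 * (q powr (2 * (l + l')) / q powr (2 * ((2 * l + m) / 4)))"
        unfolding wx power_mult_distrib Epow2[symmetric] by (simp add: power_divide)
      also have "\<dots> = 4 * C\<^sup>2 * q powr (2 * (l + l') - 2 * ((2 * l + m) / 4))"
        by (simp add: powr_diff)
      also have "\<dots> \<le> 4 * C\<^sup>2 * q powr ((2 * l + m) / 8 + (2 * l' + m') / 8)"
      proof (rule mult_left_mono)
        show "q powr (2 * (l + l') - 2 * ((2 * l + m) / 4)) \<le> q powr ((2 * l + m) / 8 + (2 * l' + m') / 8)"
          by (rule E_anti[OF q0 q1]) (use hf hf' in \<open>simp add: field_simps\<close>)
      qed simp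
      also have "\<dots> = 4 * C\<^sup>2 * g2 q x * g2 q y" unfolding g2_def gw_def lm lm' by (simp add: powr_add)
      finally show "(case (x, y) of (x, y) \<Rightarrow> (cmod (Cm x y))\<^sup>2) \<le> 4 * C\<^sup>2 * g2 q x * g2 q y" by simp
    qed auto
  qed
  show ?thesis unfolding trace_class_def T_def[symmetric] using hsA hsC prod by blast
qed


lemma key:
  assumes q0: "0 < q" and q1: "q < 1"
  shows "\<exists>C\<ge>0. supp (rho_minus q x) \<and> supp (rho_plus q x) \<and>
     (\<forall>i j. cmod (rho_minus q x i j) \<le> C * q powr (fst i + fst j))"
proof -
  obtain K B C where h: "K \<ge> 0" "C \<ge> 0"
    "\<forall>s\<in>{1, -1::real}. band K (pi_rep q s x) \<and> bnd B (pi_rep q s x) \<and> supp (pi_rep q s x)"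
    "\<forall>i j. cmod (pi_rep q 1 x i j - pi_rep q (-1) x i j) \<le> C * q powr (fst i + fst j)"
    using INV_all[OF q0 q1, of x] unfolding INV_def[OF q0 q1] by blast
  have s1: "supp (pi_rep q 1 x)" and s2: "supp (pi_rep q (-1) x)" using h(3) by auto
  have rm: "rho_minus q x i j = (1/2) * (pi_rep q 1 x i j - pi_rep q (-1) x i j)" for i j
    by (simp add: rho_minus_def mat_scale_def mat_sub_def)
  have rp: "rho_plus q x i j = (1/2) * (pi_rep q 1 x i j + pi_rep q (-1) x i j)" for i j
    by (simp add: rho_plus_def mat_scale_def mat_add_def)
  have z: "i \<in> HB \<and> j \<in> HB" if "pi_rep q 1 x i j \<noteq> 0 \<or> pi_rep q (-1) x i j \<noteq> 0" for i j
    using that s1 s2 unfolding supp_def by blast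
  have sm: "supp (rho_minus q x)" unfolding supp_def
  proof (intro allI impI)
    fix i j assume "rho_minus q x i j \<noteq> 0"
    then have "pi_rep q 1 x i j \<noteq> 0 \<or> pi_rep q (-1) x i j \<noteq> 0" unfolding rm by auto
    then show "i \<in> HB \<and> j \<in> HB" by (rule z)
  qed
  have sp: "supp (rho_plus q x)" unfolding supp_def
  proof (intro allI impI)
    fix i j assume "rho_plus q x i j \<noteq> 0"
    then have "pi_rep q 1 x i j \<noteq> 0 \<or> pi_rep q (-1) x i j \<noteq> 0" unfolding rp by auto
    then show "i \<in> HB \<and> j \<in> HB" by (rule z)
  qed
  have b: "cmod (rho_minus q x i j) \<le> C * q powr (fst i + fst j)" for i j
  proof -
    have "cmod (rho_minus q x i j) = (1/2) * cmod (pi_rep q 1 x i j - pi_rep q (-1) x i j)"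
      unfolding rm by (simp add: norm_mult)
    also have "\<dots> \<le> (1/2) * (C * q powr (fst i + fst j))"
    proof -
      have "cmod (pi_rep q 1 x i j - pi_rep q (-1) x i j) \<le> C * q powr (fst i + fst j)" using h(4) by blast
      then show ?thesis by simp
    qed
    also have "\<dots> \<le> C * q powr (fst i + fst j)" using h(2) q0 by simp
    finally show ?thesis .
  qed
  show ?thesis using h(2) sm sp b by blast
qed

theorem mainTheorem8:
  fixes q :: real
  assumes "0 < q" and "q < 1"
  shows "(\<forall>x. rapid_decay (rho_minus q x))
       \<and> (\<forall>x. commutator Fop (pi_tot q x) = mat_scale 2 (mat_tensor (rho_minus q x) (mat_mult F2 gamma2)))
       \<and> (\<forall>x. trace_class HB2 (commutator Fop (pi_tot q x)))
       \<and> finite_summable q"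
proof -
  note q0 = assms(1) and q1 = assms(2)
  have comm: "commutator Fop (pi_tot q x) = mat_scale 2 (mat_tensor (rho_minus q x) (mat_mult F2 gamma2))" for x
  proof -
    obtain C where "supp (rho_minus q x)" "supp (rho_plus q x)" using key[OF q0 q1, of x] by blast
    then show ?thesis unfolding pi_tot_def by (rule comm_gen[rotated])
  qed
  have rd: "rapid_decay (rho_minus q x)" for x
  proof -
    obtain C where C: "C \<ge> 0" "\<And>i j. cmod (rho_minus q x i j) \<le> C * q powr (fst i + fst j)"
      using key[OF q0 q1, of x] by blast
    show ?thesis unfolding rapid_decay_def
    proof
      fix p :: nat
      obtain G where G: "\<And>y. y \<ge> 0 \<Longrightarrow> (y + 1) ^ p * q powr y \<le> G" using poly_exp_bound[OF q0 q1, of p] by blast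
      have bl: "cmod (rho_minus q x (l, m) (l', m')) * (l + l' + 1) ^ p \<le> C * G"
        if "(l, m) \<in> HB" "(l', m') \<in> HB" for l m l' m'
      proof -
        have hl: "l \<ge> 1/2" "l' \<ge> 1/2" using that HB_facts by auto
        have "cmod (rho_minus q x (l, m) (l', m')) * (l + l' + 1) ^ p \<le> (C * q powr (l + l')) * (l + l' + 1) ^ p"
          using C(2)[of "(l, m)" "(l', m')"] hl by (intro mult_right_mono) auto
        also have "\<dots> = C * ((l + l' + 1) ^ p * q powr (l + l'))" by simp
        also have "\<dots> \<le> C * G" using G[of "l + l'"] hl C(1) by (intro mult_left_mono) auto
        finally show ?thesis .
      qed
      show "bdd_above ((\<lambda>((l, m), (l', m')). cmod (rho_minus q x (l, m) (l', m')) * (l + l' + 1) ^ p) ` (HB \<times> HB))"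
        by (rule bdd_aboveI2[where M="C * G"]) (auto intro!: bl)
    qed
  qed
  have tc: "trace_class HB2 (commutator Fop (pi_tot q x))" for x
  proof -
    obtain C where C: "C \<ge> 0" "supp (rho_minus q x)" "\<And>i j. cmod (rho_minus q x i j) \<le> C * q powr (fst i + fst j)"
      using key[OF q0 q1, of x] by blast
    show ?thesis unfolding comm by (rule TC[OF q0 q1 C(2) C(1) C(3)])
  qed
  have fs: "finite_summable q"
    unfolding finite_summable_def
  proof (rule exI[of _ 0], intro allI impI)
    fix xs :: "sq_expr list" assume "length xs = Suc 0"
    then obtain x where xs: "xs = [x]" by (metis length_0_conv length_Suc_conv)
    let ?c = "commutator Fop (pi_tot q x)"
    obtain C :: real where C: "C \<ge> 0" "supp (rho_minus q x)" using key[OF q0 q1, of x] by blast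
    have cz: "?c a b = 0" if "b \<notin> HB2" for a b
    proof -
      obtain i s where a: "a = (i, s)" by fastforce
      obtain j t where bb: "b = (j, t)" by fastforce
      have "j \<notin> HB" using that unfolding bb HB2_def by auto
      then have "rho_minus q x i j = 0" using C(2) unfolding supp_def by blast
      then show ?thesis unfolding comm a bb by (simp add: mat_scale_def mat_tensor_def)
    qed
    have "mat_mult ?c (mat_id HB2) = ?c"
    proof (intro ext)
      fix a b
      have "mat_mult ?c (mat_id HB2) a b = (\<lambda>k. ?c a k * mat_id HB2 k b) b"
        unfolding mat_mult_def by (rule infsum_single_pt) (auto simp: mat_id_def)
      also have "\<dots> = ?c a b" using cz[of b a] by (auto simp: mat_id_def)
      finally show "mat_mult ?c (mat_id HB2) a b = ?c a b" .
    qed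
    then show "trace_class HB2 (foldr mat_mult (map (\<lambda>x. commutator Fop (pi_tot q x)) xs) (mat_id HB2))"
      using tc[of x] unfolding xs by simp
  qed
  show ?thesis using rd comm tc fs by blast
qed


end
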